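(* Let $\mathcal B$ be a set of bidders with valuations $\{v_b\}$ on $\Omega$ and let $r\ge 0$ be reserve prices. Let $\mathcal B'=\mathcal B\cup\{a\}$ where $a$ is an additional bidder with additive valuation $v_a(S)=r(S)$, and for an allocation $\langle\Omega_b\rangle_{b\in\mathcal B}$ let $\langle\Omega'_{b'}\rangle_{b'\in\mathcal B'}$ be given by $\Omega'_b=\Omega_b$ for $b\in\mathcal B$ and $\Omega'_a=\Omega\setminus\bigcup_{b\in\mathcal B}\Omega_b$. (a1) The allocation $\langle\Omega_b\rangle$ with prices $p$ is a Walrasian equilibrium with reserve prices $r$ for $\mathcal B$ if and only if $\langle\Omega'_{b'}\rangle$ with prices $p'$ is a Walrasian equilibrium for $\mathcal B'$, where $p_j=p'_j$ for $j\in\bigcup_{b\in\mathcal B}\Omega_b$ and $p_{j'}=r_{j'}$ for $j'\in\Omega\setminus\bigcup_{b\in\mathcal B}\Omega_b$. (a2) $\langle\Omega_b\rangle$ is a Walrasian-equilibrium-with-reserve-prices-$r$ allocation if and only if (the 0/1 vector $x_{b,S}=1$ iff $S=\Omega_b$) is an optimal integral solution to the linear program $\mathrm{LP}_r$. (b) If all $v_b$ are gross substitute, then (b1) a Walrasian equilibrium with reserve prices $r$ exists for $\{v_b\}$, and (b2) the set of price vectors of Walrasian equilibria with reserve prices $r$ forms a complete lattice (closed under item-wise $\min$ and $\max$).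
   Context: $\Omega$ is a finite set of items; price vectors $p\in\mathbb{R}^\Omega_{\ge0}$, $p(S)=\sum_{j\in S}p_j$, comparisons item-wise. Each bidder has a monotone valuation $v_b:2^\Omega\to\mathbb{R}$, $v_b(\emptyset)=0$; $D_b(p)$ is the set of $S$ maximizing $v_b(S)-p(S)$. An allocation is a family of pairwise disjoint subsets $\langle\Omega_b\rangle$ of $\Omega$ (items may be unallocated); it is envy free at $p$ if $\Omega_b\in D_b(p)$ for all $b$. A Walrasian equilibrium is an envy-free allocation with prices $p\ge0$ where unallocated items have price $0$. A Walrasian equilibrium with reserve prices $r$ is an envy-free allocation with prices $p\ge r$ where every unallocated item $j$ has $p_j=r_j$. A valuation is gross substitute if for all $p^{(2)}\ge p^{(1)}\ge0$ and every $D^{(1)}\in D(p^{(1)})$ there is $D^{(2)}\in D(p^{(2)})$ containing every $j\in D^{(1)}$ with $p^{(1)}_j=p^{(2)}_j$. $\mathrm{LP}_r$: maximize $\sum_{b\in\mathcal B,S\subseteq\Omega}x_{b,S}v_b(S)+\sum_{j\in\Omega}\big(1-\sum_{b,S\ni j}x_{b,S}\big)r_j$ subject to $\sum_{b,S\ni j}x_{b,S}\le1$ for all $j\in\Omega$, $\sum_{S}x_{b,S}\le 1$ for all $b\in\mathcal B$, $x_{b,S}\ge0$. *)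

theory Defs
  imports Complex_Main
begin

definition valuation :: "'i set \<Rightarrow> ('i set \<Rightarrow> real) \<Rightarrow> bool" where
  "valuation Om v \<longleftrightarrow> v {} = 0 \<and> (\<forall>S T. S \<subseteq> T \<and> T \<subseteq> Om \<longrightarrow> v S \<le> v T)"

definition demand :: "'i set \<Rightarrow> ('i set \<Rightarrow> real) \<Rightarrow> ('i \<Rightarrow> real) \<Rightarrow> 'i set set" where
  "demand Om v p = {S. S \<subseteq> Om \<and> (\<forall>T. T \<subseteq> Om \<longrightarrow> v T - sum p T \<le> v S - sum p S)}"

definition gross_substitute :: "'i set \<Rightarrow> ('i set \<Rightarrow> real) \<Rightarrow> bool" where
  "gross_substitute Om v \<longleftrightarrow>
     (\<forall>p1 p2. (\<forall>j\<in>Om. 0 \<le> p1 j \<and> p1 j \<le> p2 j) \<longrightarrow>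
        (\<forall>D1\<in>demand Om v p1. \<exists>D2\<in>demand Om v p2. {j\<in>D1. p1 j = p2 j} \<subseteq> D2))"

definition is_allocation :: "'i set \<Rightarrow> 'b set \<Rightarrow> ('b \<Rightarrow> 'i set) \<Rightarrow> bool" where
  "is_allocation Om B A \<longleftrightarrow> (\<forall>b\<in>B. A b \<subseteq> Om) \<and>
     (\<forall>b\<in>B. \<forall>c\<in>B. b \<noteq> c \<longrightarrow> A b \<inter> A c = {})"

definition envy_free ::
  "'i set \<Rightarrow> 'b set \<Rightarrow> ('b \<Rightarrow> 'i set \<Rightarrow> real) \<Rightarrow> ('b \<Rightarrow> 'i set) \<Rightarrow> ('i \<Rightarrow> real) \<Rightarrow> bool" where
  "envy_free Om B v A p \<longleftrightarrow> (\<forall>b\<in>B. A b \<in> demand Om (v b) p)"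

definition walrasian_eq ::
  "'i set \<Rightarrow> 'b set \<Rightarrow> ('b \<Rightarrow> 'i set \<Rightarrow> real) \<Rightarrow> ('b \<Rightarrow> 'i set) \<Rightarrow> ('i \<Rightarrow> real) \<Rightarrow> bool" where
  "walrasian_eq Om B v A p \<longleftrightarrow> is_allocation Om B A \<and> envy_free Om B v A p \<and>
     (\<forall>j\<in>Om. 0 \<le> p j) \<and> (\<forall>j\<in>Om - (\<Union>b\<in>B. A b). p j = 0)"

definition walrasian_eq_reserve ::
  "'i set \<Rightarrow> 'b set \<Rightarrow> ('b \<Rightarrow> 'i set \<Rightarrow> real) \<Rightarrow> ('i \<Rightarrow> real) \<Rightarrow> ('b \<Rightarrow> 'i set) \<Rightarrow> ('i \<Rightarrow> real) \<Rightarrow> bool" where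
  "walrasian_eq_reserve Om B v r A p \<longleftrightarrow> is_allocation Om B A \<and> envy_free Om B v A p \<and>
     (\<forall>j\<in>Om. r j \<le> p j) \<and> (\<forall>j\<in>Om - (\<Union>b\<in>B. A b). p j = r j)"

definition lp_feasible :: "'i set \<Rightarrow> 'b set \<Rightarrow> ('b \<Rightarrow> 'i set \<Rightarrow> real) \<Rightarrow> bool" where
  "lp_feasible Om B x \<longleftrightarrow>
     (\<forall>b\<in>B. \<forall>S. S \<subseteq> Om \<longrightarrow> 0 \<le> x b S) \<and>
     (\<forall>j\<in>Om. (\<Sum>b\<in>B. \<Sum>S\<in>{S. S \<subseteq> Om \<and> j \<in> S}. x b S) \<le> 1) \<and>
     (\<forall>b\<in>B. (\<Sum>S\<in>Pow Om. x b S) \<le> 1)"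

definition lp_objective ::
  "'i set \<Rightarrow> 'b set \<Rightarrow> ('b \<Rightarrow> 'i set \<Rightarrow> real) \<Rightarrow> ('i \<Rightarrow> real) \<Rightarrow> ('b \<Rightarrow> 'i set \<Rightarrow> real) \<Rightarrow> real" where
  "lp_objective Om B v r x =
     (\<Sum>b\<in>B. \<Sum>S\<in>Pow Om. x b S * v b S) +
     (\<Sum>j\<in>Om. (1 - (\<Sum>b\<in>B. \<Sum>S\<in>{S. S \<subseteq> Om \<and> j \<in> S}. x b S)) * r j)"

definition lp_optimal ::
  "'i set \<Rightarrow> 'b set \<Rightarrow> ('b \<Rightarrow> 'i set \<Rightarrow> real) \<Rightarrow> ('i \<Rightarrow> real) \<Rightarrow> ('b \<Rightarrow> 'i set \<Rightarrow> real) \<Rightarrow> bool" where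
  "lp_optimal Om B v r x \<longleftrightarrow> lp_feasible Om B x \<and>
     (\<forall>y. lp_feasible Om B y \<longrightarrow> lp_objective Om B v r y \<le> lp_objective Om B v r x)"

end

theory Submission
  imports Defs
begin


definition combc :: "'v \<Rightarrow> ('v \<Rightarrow> real) \<times> real \<Rightarrow> ('v \<Rightarrow> real) \<times> real \<Rightarrow> ('v \<Rightarrow> real) \<times> real" where
  "combc w c d = ((\<lambda>v. (- fst d w) * fst c v + fst c w * fst d v), (- fst d w) * snd c + fst c w * snd d)"

lemma sum_ind: "finite C \<Longrightarrow> c \<in> C \<Longrightarrow> (\<Sum>d\<in>C. (if d = c then 1 else 0) * (g d::real)) = g c"
proof -
  assume "finite C" "c \<in> C"
  have "(\<Sum>d\<in>C. (if d = c then 1 else 0) * g d) = (\<Sum>d\<in>C. if d = c then g d else 0)"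
    by (rule sum.cong) auto
  then show ?thesis using \<open>finite C\<close> \<open>c \<in> C\<close> by (simp add: sum.delta)
qed

lemma fm_step_feasible:
  fixes V :: "'v set" and C :: "(('v \<Rightarrow> real) \<times> real) set"
  assumes fin: "finite V" "finite C" and wV: "w \<notin> V"
    and feas: "\<forall>c\<in>{c\<in>C. fst c w = 0} \<union> (\<lambda>(c,d). combc w c d) ` ({c\<in>C. fst c w > 0} \<times> {c\<in>C. fst c w < 0}).
                 (\<Sum>v\<in>V. fst c v * x' v) \<le> snd c"
  shows "\<exists>x. \<forall>c\<in>C. (\<Sum>v\<in>insert w V. fst c v * x v) \<le> snd c"
proof -
  define P where "P = {c\<in>C. fst c w > 0}"
  define N where "N = {c\<in>C. fst c w < 0}"
  define s where "s (c::('v \<Rightarrow> real) \<times> real) = (\<Sum>v\<in>V. fst c v * x' v)" for c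
  define L where "L (d::('v \<Rightarrow> real) \<times> real) = (snd d - s d) / fst d w" for d
  define t where "t = (if N \<noteq> {} then Max (L ` N) else if P \<noteq> {} then Min (L ` P) else 0)"
  define x where "x = x'(w := t)"
  have finPN: "finite P" "finite N" using fin by (auto simp: P_def N_def)
  have sumx: "(\<Sum>v\<in>insert w V. fst c v * x v) = fst c w * t + s c" for c
  proof -
    have "(\<Sum>v\<in>V. fst c v * x v) = s c" unfolding s_def x_def
      by (rule sum.cong) (use wV in auto)
    then show ?thesis using fin wV by (simp add: x_def)
  qed
  have comb: "s (combc w c d) = (- fst d w) * s c + fst c w * s d" for c d
  proof -
    have "s (combc w c d) = (\<Sum>v\<in>V. (- fst d w) * (fst c v * x' v) + fst c w * (fst d v * x' v))"
      unfolding s_def by (rule sum.cong) (auto simp: combc_def algebra_simps)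
    also have "\<dots> = (- fst d w) * s c + fst c w * s d"
      unfolding s_def by (simp only: sum.distrib sum_distrib_left)
    finally show ?thesis .
  qed
  have PN: "L d \<le> L c" if "c \<in> P" "d \<in> N" for c d
  proof -
    have "combc w c d \<in> (\<lambda>(c,d). combc w c d) ` (P \<times> N)" using that by force
    then have "s (combc w c d) \<le> snd (combc w c d)" using feas unfolding P_def N_def s_def by blast
    then have h: "(- fst d w) * s c + fst c w * s d \<le> (- fst d w) * snd c + fst c w * snd d"
      by (simp only: comb) (simp add: combc_def)
    have cw: "fst c w > 0" and dw: "fst d w < 0" using that by (auto simp: P_def N_def)
    show ?thesis unfolding L_def using h cw dw
      by (simp add: divide_simps) (simp add: algebra_simps)
  qed
  show ?thesis
  proof (intro exI ballI)
    fix c assume cC: "c \<in> C"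
    show "(\<Sum>v\<in>insert w V. fst c v * x v) \<le> snd c"
    proof (cases "fst c w = 0")
      case True
      then have "s c \<le> snd c" using feas cC unfolding s_def by blast
      then show ?thesis using True by (simp add: sumx)
    next
      case False
      show ?thesis
      proof (cases "fst c w > 0")
        case pos: True
        then have cP: "c \<in> P" using cC by (simp add: P_def)
        have "t \<le> L c"
        proof (cases "N = {}")
          case True
          then have "t = Min (L ` P)" using cP by (auto simp: t_def)
          then show ?thesis using finPN cP by simp
        next
          case False
          then have "t = Max (L ` N)" by (simp add: t_def)
          moreover have "Max (L ` N) \<in> L ` N" using False finPN by simp
          ultimately obtain d where "d \<in> N" "t = L d" by auto
          then show ?thesis using PN cP by simp
        qed
        then have "fst c w * t \<le> fst c w * L c" using pos by (simp add: mult_left_mono)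
        also have "\<dots> = snd c - s c" using pos by (simp add: L_def)
        finally show ?thesis by (simp add: sumx)
      next
        case neg: False
        then have cw: "fst c w < 0" using False by simp
        then have cN: "c \<in> N" using cC by (simp add: N_def)
        then have "t = Max (L ` N)" by (auto simp: t_def)
        then have "L c \<le> t" using finPN cN by simp
        then have "fst c w * t \<le> fst c w * L c" using cw by (simp add: mult_left_mono_neg)
        also have "\<dots> = snd c - s c" using cw by (simp add: L_def)
        finally show ?thesis by (simp add: sumx)
      qed
    qed
  qed
qed

lemma fm_farkas_set:
  fixes V :: "'v set" and C :: "(('v \<Rightarrow> real) \<times> real) set"
  assumes "finite V"
  shows "finite C \<Longrightarrow> \<not> (\<exists>x. \<forall>c\<in>C. (\<Sum>v\<in>V. fst c v * x v) \<le> snd c) \<Longrightarrow>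
    \<exists>l. (\<forall>c\<in>C. 0 \<le> l c) \<and> (\<forall>v\<in>V. (\<Sum>c\<in>C. l c * fst c v) = 0) \<and> (\<Sum>c\<in>C. l c * snd c) < 0"
  using assms
proof (induction V arbitrary: C rule: finite_induct)
  case empty
  have "\<exists>c\<in>C. snd c < 0"
  proof (rule ccontr)
    assume "\<not> (\<exists>c\<in>C. snd c < 0)"
    then have "\<forall>c\<in>C. (\<Sum>v\<in>{}. fst c v * x v) \<le> snd c" for x :: "'v \<Rightarrow> real" by auto
    then show False using empty by blast
  qed
  then obtain c where cC: "c \<in> C" and neg: "snd c < 0" by blast
  show ?case
    by (rule exI[of _ "\<lambda>d. if d = c then 1 else 0"]) (use empty cC neg in \<open>auto simp: sum_ind\<close>)
next
  case (insert w V)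
  define P where "P = {c\<in>C. fst c w > 0}"
  define N where "N = {c\<in>C. fst c w < 0}"
  define Z where "Z = {c\<in>C. fst c w = 0}"
  define C' where "C' = Z \<union> (\<lambda>(c,d). combc w c d) ` (P \<times> N)"
  have finC': "finite C'" using insert.prems by (auto simp: C'_def Z_def P_def N_def)
  have infeas: "\<not> (\<exists>x. \<forall>c\<in>C'. (\<Sum>v\<in>V. fst c v * x v) \<le> snd c)"
  proof
    assume "\<exists>x. \<forall>c\<in>C'. (\<Sum>v\<in>V. fst c v * x v) \<le> snd c"
    then obtain x' where "\<forall>c\<in>C'. (\<Sum>v\<in>V. fst c v * x' v) \<le> snd c" by blast
    then have "\<exists>x. \<forall>c\<in>C. (\<Sum>v\<in>insert w V. fst c v * x v) \<le> snd c"
      using fm_step_feasible[of V C w x'] insert.hyps insert.prems unfolding C'_def Z_def P_def N_def by blast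
    then show False using insert.prems by blast
  qed
  obtain l' where l'0: "\<forall>c\<in>C'. 0 \<le> l' c" and l'V: "\<forall>v\<in>V. (\<Sum>c\<in>C'. l' c * fst c v) = 0"
    and l'neg: "(\<Sum>c\<in>C'. l' c * snd c) < 0"
    using insert.IH[OF finC' infeas] by blast
  define rep where "rep c' = (SOME cd. cd \<in> P \<times> N \<and> combc w (fst cd) (snd cd) = c')" for c'
  define mu where "mu c' e = (if c' \<in> Z then (if e = c' then 1 else 0) else
      (if e = fst (rep c') then - fst (snd (rep c')) w else 0) + (if e = snd (rep c') then fst (fst (rep c')) w else 0))" for c' e
  have repP: "rep c' \<in> P \<times> N \<and> combc w (fst (rep c')) (snd (rep c')) = c'" if "c' \<in> C'" "c' \<notin> Z" for c'
  proof -
    have "\<exists>cd. cd \<in> P \<times> N \<and> combc w (fst cd) (snd cd) = c'" using that by (auto simp: C'_def)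
    then show ?thesis unfolding rep_def by (rule someI_ex)
  qed
  have PN_disj: "fst (rep c') \<noteq> snd (rep c')" if "c' \<in> C'" "c' \<notin> Z" for c'
    using repP[OF that] by (auto simp: P_def N_def)
  have mu0: "0 \<le> mu c' e" if "c' \<in> C'" for c' e
    using repP[of c'] that by (auto simp: mu_def P_def N_def)
  have finC: "finite C" by fact
  have muf: "(\<Sum>e\<in>C. mu c' e * f e) = g c'" if "c' \<in> C'"
     and hZ: "\<And>c'. c' \<in> Z \<Longrightarrow> g c' = f c'"
     and hc: "\<And>c d. c \<in> P \<Longrightarrow> d \<in> N \<Longrightarrow> g (combc w c d) = (- fst d w) * f c + fst c w * f d"
     for c' f g
  proof (cases "c' \<in> Z")
    case True
    then have "c' \<in> C" by (simp add: Z_def)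
    moreover have "mu c' e = (if e = c' then 1 else 0)" for e by (simp add: mu_def True)
    ultimately show ?thesis using True hZ finC by (simp add: sum_ind)
  next
    case False
    obtain c d where cd: "rep c' = (c, d)" by (cases "rep c'")
    have cP: "c \<in> P" and dN: "d \<in> N" and cc: "combc w c d = c'" using repP[OF that(1) False] cd by auto
    have cd': "c \<noteq> d" using PN_disj[OF that(1) False] cd by simp
    have inC: "c \<in> C" "d \<in> C" using cP dN by (auto simp: P_def N_def)
    have "(\<Sum>e\<in>C. mu c' e * f e) = (\<Sum>e\<in>C. (if e = c then - fst d w * f e else 0) + (if e = d then fst c w * f e else 0))"
      by (rule sum.cong) (auto simp: mu_def False cd cd')
    also have "\<dots> = - fst d w * f c + fst c w * f d"
      using inC finC by (simp add: sum.distrib sum.delta)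
    finally show ?thesis using hc[OF cP dN] cc by simp
  qed
  define l where "l e = (\<Sum>c'\<in>C'. l' c' * mu c' e)" for e
  have sw: "(\<Sum>e\<in>C. l e * f e) = (\<Sum>c'\<in>C'. l' c' * (\<Sum>e\<in>C. mu c' e * f e))" for f
    unfolding l_def by (simp add: sum_distrib_left sum_distrib_right mult.assoc sum.swap[of _ C])
  show ?case
  proof (intro exI conjI ballI)
    fix e assume "e \<in> C"
    show "0 \<le> l e" unfolding l_def using l'0 mu0 by (intro sum_nonneg) (simp add: mult_nonneg_nonneg)
  next
    fix v assume v: "v \<in> insert w V"
    have "(\<Sum>e\<in>C. l e * fst e v) = (\<Sum>c'\<in>C'. l' c' * fst c' v)"
      unfolding sw by (rule sum.cong) (auto intro!: muf simp: combc_def Z_def)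
    also have "\<dots> = 0"
    proof (cases "v = w")
      case True
      have "fst c' w = 0" if "c' \<in> C'" for c'
        using that by (auto simp: C'_def Z_def combc_def)
      then show ?thesis using True by simp
    next
      case False
      then show ?thesis using v l'V by simp
    qed
    finally show "(\<Sum>e\<in>C. l e * fst e v) = 0" .
  next
    have "(\<Sum>e\<in>C. l e * snd e) = (\<Sum>c'\<in>C'. l' c' * snd c')"
      unfolding sw by (rule sum.cong) (auto intro!: muf simp: combc_def Z_def)
    then show "(\<Sum>e\<in>C. l e * snd e) < 0" using l'neg by simp
  qed
qed

lemma farkas_idx:
  fixes V :: "'v set" and I :: "'k set" and A :: "'k \<Rightarrow> 'v \<Rightarrow> real" and bb :: "'k \<Rightarrow> real"
  assumes finV: "finite V" and finI: "finite I"
    and infeas: "\<not> (\<exists>x. \<forall>i\<in>I. (\<Sum>v\<in>V. A i v * x v) \<le> bb i)"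
  shows "\<exists>l. (\<forall>i\<in>I. 0 \<le> l i) \<and> (\<forall>v\<in>V. (\<Sum>i\<in>I. l i * A i v) = 0) \<and> (\<Sum>i\<in>I. l i * bb i) < 0"
proof -
  define f where "f i = (A i, bb i)" for i
  define C where "C = f ` I"
  have finC: "finite C" using finI by (simp add: C_def)
  have "\<not> (\<exists>x. \<forall>c\<in>C. (\<Sum>v\<in>V. fst c v * x v) \<le> snd c)"
    using infeas by (auto simp: C_def f_def)
  then obtain lc where lc0: "\<forall>c\<in>C. 0 \<le> lc c" and lcV: "\<forall>v\<in>V. (\<Sum>c\<in>C. lc c * fst c v) = 0"
    and lcn: "(\<Sum>c\<in>C. lc c * snd c) < 0"
    using fm_farkas_set[OF finV finC] by blast
  define K where "K y = {x\<in>I. f x = y}" for y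
  define l where "l i = lc (f i) / real (card (K (f i)))" for i
  have key: "(\<Sum>i\<in>I. l i * F (f i)) = (\<Sum>c\<in>C. lc c * F c)" for F :: "('v \<Rightarrow> real) \<times> real \<Rightarrow> real"
  proof -
    have "(\<Sum>i\<in>I. l i * F (f i)) = (\<Sum>y\<in>f ` I. \<Sum>x\<in>{x\<in>I. f x = y}. l x * F (f x))"
      using finI by (rule sum.image_gen)
    also have "\<dots> = (\<Sum>y\<in>C. lc y * F y)"
    proof (rule sum.cong)
      fix y assume y: "y \<in> C"
      have finK: "finite (K y)" using finI by (simp add: K_def)
      have neK: "K y \<noteq> {}" using y by (auto simp: K_def C_def)
      have "(\<Sum>x\<in>{x\<in>I. f x = y}. l x * F (f x)) = (\<Sum>x\<in>K y. lc y / real (card (K y)) * F y)"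
        by (rule sum.cong) (auto simp: K_def l_def)
      also have "\<dots> = lc y * F y" using finK neK by (simp add: card_gt_0_iff)
      finally show "(\<Sum>x\<in>{x\<in>I. f x = y}. l x * F (f x)) = lc y * F y" .
    qed (simp add: C_def)
    finally show ?thesis .
  qed
  show ?thesis
  proof (intro exI conjI ballI)
    fix i assume "i \<in> I"
    then show "0 \<le> l i" using lc0 by (auto simp: l_def C_def)
  next
    fix v assume "v \<in> V"
    have "(\<Sum>i\<in>I. l i * A i v) = (\<Sum>i\<in>I. l i * fst (f i) v)" by (simp add: f_def)
    also have "\<dots> = 0" using key[of "\<lambda>c. fst c v"] lcV \<open>v \<in> V\<close> by simp
    finally show "(\<Sum>i\<in>I. l i * A i v) = 0" .
  next
    have "(\<Sum>i\<in>I. l i * bb i) = (\<Sum>i\<in>I. l i * snd (f i))" by (simp add: f_def)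
    also have "\<dots> < 0" using key[of snd] lcn by simp
    finally show "(\<Sum>i\<in>I. l i * bb i) < 0" .
  qed
qed




definition Vind :: "'i set \<Rightarrow> ('i set \<Rightarrow> real) \<Rightarrow> ('i \<Rightarrow> real) \<Rightarrow> real" where
  "Vind Om v p = Max ((\<lambda>S. v S - sum p S) ` Pow Om)"

lemma Vind_ge: "finite Om \<Longrightarrow> S \<subseteq> Om \<Longrightarrow> v S - sum p S \<le> Vind Om v p"
  unfolding Vind_def by (rule Max_ge) auto

lemma Vind_attained: "finite Om \<Longrightarrow> \<exists>D. D \<subseteq> Om \<and> Vind Om v p = v D - sum p D"
proof -
  assume f: "finite Om"
  have "Vind Om v p \<in> (\<lambda>S. v S - sum p S) ` Pow Om" unfolding Vind_def
    using f by (intro Max_in) auto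
  then show ?thesis by auto
qed

lemma demand_Vind: "finite Om \<Longrightarrow> D \<in> demand Om v p \<longleftrightarrow> D \<subseteq> Om \<and> v D - sum p D = Vind Om v p"
proof
  assume f: "finite Om" and D: "D \<in> demand Om v p"
  then have DO: "D \<subseteq> Om" by (simp add: demand_def)
  obtain E where "E \<subseteq> Om" "Vind Om v p = v E - sum p E" using Vind_attained[OF f] by blast
  then show "D \<subseteq> Om \<and> v D - sum p D = Vind Om v p"
    using D DO Vind_ge[OF f DO, of v p] by (force simp: demand_def)
next
  assume f: "finite Om" and h: "D \<subseteq> Om \<and> v D - sum p D = Vind Om v p"
  then show "D \<in> demand Om v p" using Vind_ge[OF f] by (auto simp: demand_def)
qed

lemma demand_ne: "finite Om \<Longrightarrow> \<exists>D. D \<in> demand Om v p"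
  using Vind_attained demand_Vind by metis

lemma gs_submod:
  fixes m a c :: "'i \<Rightarrow> real"
  assumes f: "finite Om" and gs: "gross_substitute Om v"
    and m0: "\<forall>j\<in>Om. 0 \<le> m j" and a0: "\<forall>j\<in>Om. 0 \<le> a j" and c0: "\<forall>j\<in>Om. 0 \<le> c j"
    and disj: "\<forall>j\<in>Om. a j = 0 \<or> c j = 0"
  shows "Vind Om v (\<lambda>j. m j + a j + c j) + Vind Om v m \<le> Vind Om v (\<lambda>j. m j + a j) + Vind Om v (\<lambda>j. m j + c j)"
proof -
  define X where "X = Vind Om v (\<lambda>j. m j + a j + c j) + Vind Om v m - Vind Om v (\<lambda>j. m j + a j) - Vind Om v (\<lambda>j. m j + c j)"
  have bound: "X \<le> sum a Om / real N" if N: "N > 0" for N :: nat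
  proof -
    define x where "x k = (\<lambda>j. m j + real k / real N * a j)" for k
    define y where "y k = (\<lambda>j. x k j + c j)" for k
    define D where "D k = (SOME D. D \<in> demand Om v (x k))" for k
    have Dd: "D k \<in> demand Om v (x k)" for k
      unfolding D_def using demand_ne[OF f] by (rule someI_ex)
    have xy: "\<forall>j\<in>Om. 0 \<le> x k j \<and> x k j \<le> y k j" for k
      using m0 a0 c0 by (auto simp: x_def y_def)
    define F where "F k = (SOME F. F \<in> demand Om v (y k) \<and> {j\<in>D k. x k j = y k j} \<subseteq> F)" for k
    have Fd: "F k \<in> demand Om v (y k) \<and> {j\<in>D k. x k j = y k j} \<subseteq> F k" for k
    proof -
      have "\<exists>F. F \<in> demand Om v (y k) \<and> {j\<in>D k. x k j = y k j} \<subseteq> F"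
        using gs xy[of k] Dd[of k] unfolding gross_substitute_def by blast
      then show ?thesis unfolding F_def by (rule someI_ex)
    qed
    have DO: "D k \<subseteq> Om" for k using Dd[of k] by (simp add: demand_def)
    have FO: "F k \<subseteq> Om" for k using Fd[of k] by (simp add: demand_def)
    have finD: "finite (D k)" for k using DO f finite_subset by blast
    have finF: "finite (F k)" for k using FO f finite_subset by blast
    have sx: "sum (x (Suc k)) S = sum (x k) S + sum a S / real N" for k S
    proof -
      have "x (Suc k) = (\<lambda>j. x k j + a j / real N)"
        by (rule ext) (simp add: x_def add_divide_distrib distrib_right)
      then show ?thesis by (simp add: sum.distrib sum_divide_distrib)
    qed
    have sy: "sum (y (Suc k)) S = sum (y k) S + sum a S / real N" for k S
      using sx[of k S] by (simp add: y_def sum.distrib)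
    have saDF: "sum a (D k) \<le> sum a (F k)" for k
    proof -
      have "sum a (D k) = sum a {j\<in>D k. a j \<noteq> 0}"
        by (rule sum.mono_neutral_right) (auto simp: finD)
      also have "\<dots> \<le> sum a (F k)"
      proof (rule sum_mono2[OF finF])
        show "{j \<in> D k. a j \<noteq> 0} \<subseteq> F k"
        proof
          fix j assume j: "j \<in> {j \<in> D k. a j \<noteq> 0}"
          then have "j \<in> Om" using DO by auto
          then have "c j = 0" using disj j by auto
          then have "x k j = y k j" by (simp add: y_def)
          then show "j \<in> F k" using Fd[of k] j by auto
        qed
        show "\<And>b. b \<in> F k - {j \<in> D k. a j \<noteq> 0} \<Longrightarrow> 0 \<le> a b" using a0 FO by auto
      qed
      finally show ?thesis .
    qed
    define g where "g k = Vind Om v (y k) - Vind Om v (x k) + sum a (D k) / real N" for k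
    have step: "g (Suc k) \<le> g k" for k
    proof -
      have I1: "Vind Om v (x (Suc k)) \<ge> Vind Om v (x k) - sum a (D k) / real N"
        using Vind_ge[OF f DO[of k], of v "x (Suc k)"] Dd[of k] f
        by (simp add: demand_Vind sx)
      have I2: "Vind Om v (y k) \<ge> Vind Om v (y (Suc k)) + sum a (F (Suc k)) / real N"
        using Vind_ge[OF f FO[of "Suc k"], of v "y k"] Fd[of "Suc k"] f
        by (simp add: demand_Vind sy)
      have I3: "sum a (D (Suc k)) / real N \<le> sum a (F (Suc k)) / real N"
        using saDF[of "Suc k"] N by (simp add: divide_right_mono)
      show ?thesis unfolding g_def using I1 I2 I3 by (simp add: diff_divide_distrib)
    qed
    have gk: "g k \<le> g 0" for k
      by (induction k) (use step order_trans in auto)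
    have x0: "x 0 = m" by (rule ext) (simp add: x_def)
    have y0: "y 0 = (\<lambda>j. m j + c j)" by (rule ext) (simp add: y_def x_def)
    have xN: "x N = (\<lambda>j. m j + a j)" by (rule ext) (use N in \<open>simp add: x_def\<close>)
    have yN: "y N = (\<lambda>j. m j + a j + c j)" by (rule ext) (use N in \<open>simp add: y_def x_def\<close>)
    have aDN: "0 \<le> sum a (D N)" using a0 DO[of N] by (intro sum_nonneg) auto
    have aD0: "sum a (D 0) \<le> sum a Om" using a0 DO[of 0] f by (intro sum_mono2) auto
    have "g N \<le> g 0" by (rule gk)
    then have "X + sum a (D N) / real N \<le> sum a (D 0) / real N"
      unfolding g_def X_def x0 y0 xN yN by simp
    moreover have "sum a (D N) / real N \<ge> 0" using aDN by simp
    moreover have "sum a (D 0) / real N \<le> sum a Om / real N" using aD0 N by (simp add: divide_right_mono)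
    ultimately show ?thesis by linarith
  qed
  have "X \<le> 0"
  proof (rule ccontr)
    assume "\<not> X \<le> 0"
    then have Xp: "X > 0" by simp
    obtain n :: nat where n: "sum a Om / X < real n" using reals_Archimedean2 by blast
    have sa0: "sum a Om \<ge> 0" using a0 by (intro sum_nonneg) auto
    have np: "n > 0" using n sa0 Xp by (metis divide_nonneg_pos not_gr0 of_nat_0 not_less)
    have "sum a Om < X * real n" using n Xp by (simp add: divide_less_eq mult.commute)
    then have "sum a Om / real n < X" using np by (simp add: divide_less_eq)
    then show False using bound[OF np] by simp
  qed
  then show ?thesis unfolding X_def by simp
qed




lemma gs_lattice_bidder:
  assumes f: "finite Om" and gs: "gross_substitute Om v"
    and p0: "\<forall>j\<in>Om. 0 \<le> p j" and q0: "\<forall>j\<in>Om. 0 \<le> q j"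
    and Dp: "D \<in> demand Om v p" and Dq: "D \<in> demand Om v q"
  shows "D \<in> demand Om v (\<lambda>j. max (p j) (q j)) \<and> D \<in> demand Om v (\<lambda>j. min (p j) (q j))"
proof -
  define m where "m = (\<lambda>j. min (p j) (q j))"
  define a where "a = (\<lambda>j. p j - m j)"
  define c where "c = (\<lambda>j. q j - m j)"
  define M where "M = (\<lambda>j. max (p j) (q j))"
  have e1: "(\<lambda>j. m j + a j) = p" by (rule ext) (simp add: a_def)
  have e2: "(\<lambda>j. m j + c j) = q" by (rule ext) (simp add: c_def)
  have e3: "(\<lambda>j. m j + a j + c j) = M" by (rule ext) (auto simp: a_def c_def m_def M_def)
  have sub: "Vind Om v M + Vind Om v m \<le> Vind Om v p + Vind Om v q"
  proof -
    have "\<forall>j\<in>Om. 0 \<le> m j" using p0 q0 by (auto simp: m_def)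
    moreover have "\<forall>j\<in>Om. 0 \<le> a j" "\<forall>j\<in>Om. 0 \<le> c j" "\<forall>j\<in>Om. a j = 0 \<or> c j = 0"
      by (auto simp: a_def c_def m_def min_def)
    ultimately show ?thesis using gs_submod[OF f gs, of m a c] unfolding e1 e2 e3 by blast
  qed
  have DO: "D \<subseteq> Om" using Dp by (simp add: demand_def)
  have Vp: "Vind Om v p = v D - sum p D" and Vq: "Vind Om v q = v D - sum q D"
    using Dp Dq f by (auto simp: demand_Vind)
  have sPQ: "sum p D + sum q D = sum M D + sum m D"
    by (simp add: sum.distrib[symmetric] M_def m_def) (rule sum.cong, auto)
  have gM: "v D - sum M D \<le> Vind Om v M" and gm: "v D - sum m D \<le> Vind Om v m"
    using Vind_ge[OF f DO] by auto
  have "v D - sum M D = Vind Om v M" "v D - sum m D = Vind Om v m"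
    using sub Vp Vq sPQ gM gm by linarith+
  then show ?thesis using DO f by (simp add: demand_Vind M_def m_def)
qed

definition W :: "'i set \<Rightarrow> 'b set \<Rightarrow> ('b \<Rightarrow> 'i set \<Rightarrow> real) \<Rightarrow> ('i \<Rightarrow> real) \<Rightarrow> ('b \<Rightarrow> 'i set) \<Rightarrow> real" where
  "W Om B v r Z = (\<Sum>b\<in>B. v b (Z b)) + sum r (Om - (\<Union>b\<in>B. Z b))"

lemma sum_alloc:
  assumes "is_allocation Om B Z" "finite Om" "finite B"
  shows "sum p Om = (\<Sum>b\<in>B. sum p (Z b)) + sum p (Om - (\<Union>b\<in>B. Z b))"
proof -
  have sub: "(\<Union>b\<in>B. Z b) \<subseteq> Om" using assms(1) by (auto simp: is_allocation_def)
  have fin: "\<forall>b\<in>B. finite (Z b)" using assms(1,2) finite_subset by (auto simp: is_allocation_def)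
  have "sum p (\<Union>b\<in>B. Z b) = (\<Sum>b\<in>B. sum p (Z b))"
    using assms(1,3) fin by (intro sum.UNION_disjoint) (auto simp: is_allocation_def)
  moreover have "sum p Om = sum p (Om - (\<Union>b\<in>B. Z b)) + sum p (\<Union>b\<in>B. Z b)"
    using sub assms(2) by (rule sum.subset_diff)
  ultimately show ?thesis by (metis add.commute)
qed

lemma slack_identity:
  assumes f: "finite Om" "finite B" and X: "walrasian_eq_reserve Om B v r X p"
    and Z: "is_allocation Om B Z"
  shows "W Om B v r X - W Om B v r Z =
    (\<Sum>b\<in>B. (v b (X b) - sum p (X b)) - (v b (Z b) - sum p (Z b))) + (\<Sum>j\<in>Om - (\<Union>b\<in>B. Z b). p j - r j)"
proof -
  have XA: "is_allocation Om B X" and pr: "\<forall>j\<in>Om - (\<Union>b\<in>B. X b). p j = r j"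
    using X by (auto simp: walrasian_eq_reserve_def)
  have rX: "sum r (Om - (\<Union>b\<in>B. X b)) = sum p (Om - (\<Union>b\<in>B. X b))"
    using pr by (intro sum.cong) auto
  have sX: "sum p Om = (\<Sum>b\<in>B. sum p (X b)) + sum p (Om - (\<Union>b\<in>B. X b))"
    using sum_alloc[OF XA f] .
  have sZ: "sum p Om = (\<Sum>b\<in>B. sum p (Z b)) + sum p (Om - (\<Union>b\<in>B. Z b))"
    using sum_alloc[OF Z f] .
  show ?thesis unfolding W_def rX
    using sX sZ by (simp add: sum_subtractf sum.distrib algebra_simps)
qed

lemma WE_supports:
  assumes f: "finite Om" "finite B" and X: "walrasian_eq_reserve Om B v r X p"
    and Y: "walrasian_eq_reserve Om B v r Y q"
  shows "(\<forall>b\<in>B. Y b \<in> demand Om (v b) p) \<and> (\<forall>j\<in>Om - (\<Union>b\<in>B. Y b). p j = r j)"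
proof -
  have XA: "is_allocation Om B X" and YA: "is_allocation Om B Y"
    using X Y by (auto simp: walrasian_eq_reserve_def)
  define s where "s b = (v b (X b) - sum p (X b)) - (v b (Y b) - sum p (Y b))" for b
  define s' where "s' b = (v b (Y b) - sum q (Y b)) - (v b (X b) - sum q (X b))" for b
  have s0: "\<forall>b\<in>B. 0 \<le> s b"
    using X YA by (auto simp: s_def walrasian_eq_reserve_def envy_free_def demand_def is_allocation_def)
  have s'0: "\<forall>b\<in>B. 0 \<le> s' b"
    using Y XA by (auto simp: s'_def walrasian_eq_reserve_def envy_free_def demand_def is_allocation_def)
  have t0: "\<forall>j\<in>Om - (\<Union>b\<in>B. Y b). 0 \<le> p j - r j" using X by (auto simp: walrasian_eq_reserve_def)
  have t'0: "\<forall>j\<in>Om - (\<Union>b\<in>B. X b). 0 \<le> q j - r j" using Y by (auto simp: walrasian_eq_reserve_def)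
  have e1: "W Om B v r X - W Om B v r Y = sum s B + (\<Sum>j\<in>Om - (\<Union>b\<in>B. Y b). p j - r j)"
    using slack_identity[OF f X YA] by (simp add: s_def)
  have e2: "W Om B v r Y - W Om B v r X = sum s' B + (\<Sum>j\<in>Om - (\<Union>b\<in>B. X b). q j - r j)"
    using slack_identity[OF f Y XA] by (simp add: s'_def)
  have A1: "sum s B \<ge> 0" using s0 by (intro sum_nonneg) auto
  have A2: "(\<Sum>j\<in>Om - (\<Union>b\<in>B. Y b). p j - r j) \<ge> 0" using t0 by (intro sum_nonneg) auto
  have A3: "sum s' B \<ge> 0" using s'0 by (intro sum_nonneg) auto
  have A4: "(\<Sum>j\<in>Om - (\<Union>b\<in>B. X b). q j - r j) \<ge> 0" using t'0 by (intro sum_nonneg) auto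
  have z1: "sum s B = 0" and z2: "(\<Sum>j\<in>Om - (\<Union>b\<in>B. Y b). p j - r j) = 0"
    using e1 e2 A1 A2 A3 A4 by linarith+
  have sb: "\<forall>b\<in>B. s b = 0" using z1 s0 f(2) sum_nonneg_eq_0_iff by blast
  have tj: "\<forall>j\<in>Om - (\<Union>b\<in>B. Y b). p j - r j = 0"
    using z2 t0 f(1) sum_nonneg_eq_0_iff[of "Om - (\<Union>b\<in>B. Y b)" "\<lambda>j. p j - r j"] by blast
  have "Y b \<in> demand Om (v b) p" if b: "b \<in> B" for b
  proof -
    have "X b \<in> demand Om (v b) p" using X b by (auto simp: walrasian_eq_reserve_def envy_free_def)
    moreover have "Y b \<subseteq> Om" using YA b by (auto simp: is_allocation_def)
    moreover have "s b = 0" using sb b by auto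
    ultimately show ?thesis by (auto simp: demand_def s_def)
  qed
  then show ?thesis using tj by auto
qed

lemma lattice_part:
  assumes f: "finite Om" "finite B" and r0: "\<forall>j\<in>Om. 0 \<le> r j"
    and gs: "\<forall>b\<in>B. gross_substitute Om (v b)"
    and X: "walrasian_eq_reserve Om B v r X p" and Y: "walrasian_eq_reserve Om B v r Y q"
  shows "walrasian_eq_reserve Om B v r Y (\<lambda>j. min (p j) (q j)) \<and> walrasian_eq_reserve Om B v r Y (\<lambda>j. max (p j) (q j))"
proof -
  have sup: "(\<forall>b\<in>B. Y b \<in> demand Om (v b) p) \<and> (\<forall>j\<in>Om - (\<Union>b\<in>B. Y b). p j = r j)"
    using WE_supports[OF f X Y] .
  have p0: "\<forall>j\<in>Om. 0 \<le> p j" using X r0 by (force simp: walrasian_eq_reserve_def)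
  have q0: "\<forall>j\<in>Om. 0 \<le> q j" using Y r0 by (force simp: walrasian_eq_reserve_def)
  have dm: "\<forall>b\<in>B. Y b \<in> demand Om (v b) (\<lambda>j. max (p j) (q j)) \<and> Y b \<in> demand Om (v b) (\<lambda>j. min (p j) (q j))"
  proof
    fix b assume b: "b \<in> B"
    have "Y b \<in> demand Om (v b) q" using Y b by (auto simp: walrasian_eq_reserve_def envy_free_def)
    then show "Y b \<in> demand Om (v b) (\<lambda>j. max (p j) (q j)) \<and> Y b \<in> demand Om (v b) (\<lambda>j. min (p j) (q j))"
      using gs_lattice_bidder[OF f(1) _ p0 q0] gs b sup by blast
  qed
  show ?thesis using X Y sup dm
    by (auto simp: walrasian_eq_reserve_def envy_free_def)
qed




lemma part_a1:
  assumes f: "finite Om" and r0: "\<forall>j\<in>Om. 0 \<le> r j" and aB: "a \<notin> B"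
    and A: "is_allocation Om B A" and pU: "\<forall>j\<in>Om - (\<Union>b\<in>B. A b). p j = r j"
  shows "walrasian_eq_reserve Om B v r A p \<longleftrightarrow>
     (\<exists>p'. (\<forall>j\<in>(\<Union>b\<in>B. A b). p' j = p j) \<and>
           walrasian_eq Om (insert a B) (v(a := (\<lambda>S. sum r S))) (A(a := Om - (\<Union>b\<in>B. A b))) p')"
    (is "?L \<longleftrightarrow> ?R")
proof
  define U where "U = Om - (\<Union>b\<in>B. A b)"
  have AO: "\<forall>b\<in>B. A b \<subseteq> Om" using A by (simp add: is_allocation_def)
  assume L: ?L
  have rp: "\<forall>j\<in>Om. r j \<le> p j" using L by (simp add: walrasian_eq_reserve_def)
  have alloc: "is_allocation Om (insert a B) (A(a := U))"
    using A aB unfolding is_allocation_def U_def by auto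
  have dema: "U \<in> demand Om (\<lambda>S. sum r S) p"
  proof -
    have "sum r U - sum p U = 0" using pU by (simp add: U_def)
    moreover have "sum r T - sum p T \<le> 0" if "T \<subseteq> Om" for T
      using rp that by (simp add: sum_mono subset_iff)
    ultimately show ?thesis by (auto simp: demand_def U_def)
  qed
  have ef: "envy_free Om (insert a B) (v(a := (\<lambda>S. sum r S))) (A(a := U)) p"
    using L dema aB unfolding envy_free_def walrasian_eq_reserve_def by auto
  have cover: "Om - (\<Union>b\<in>insert a B. (A(a := U)) b) = {}"
    using aB by (auto simp: U_def)
  have "walrasian_eq Om (insert a B) (v(a := (\<lambda>S. sum r S))) (A(a := U)) p"
    unfolding walrasian_eq_def using alloc ef cover rp r0 by (auto intro: order_trans)
  then show ?R unfolding U_def by blast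
next
  define U where "U = Om - (\<Union>b\<in>B. A b)"
  have AO: "\<forall>b\<in>B. A b \<subseteq> Om" using A by (simp add: is_allocation_def)
  assume ?R
  then obtain p' where pp: "\<forall>j\<in>(\<Union>b\<in>B. A b). p' j = p j"
    and we: "walrasian_eq Om (insert a B) (v(a := (\<lambda>S. sum r S))) (A(a := U)) p'"
    unfolding U_def by blast
  have ef: "envy_free Om (insert a B) (v(a := (\<lambda>S. sum r S))) (A(a := U)) p'"
    using we by (simp add: walrasian_eq_def)
  have dema: "U \<in> demand Om (\<lambda>S. sum r S) p'" using ef by (simp add: envy_free_def)
  have demb: "A b \<in> demand Om (v b) p'" if "b \<in> B" for b
    using ef that aB unfolding envy_free_def by (metis fun_upd_other insertCI)
  have finU: "finite U" using f by (simp add: U_def)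
  have low: "p' j \<le> r j" if j: "j \<in> U" for j
  proof -
    have "U - {j} \<subseteq> Om" by (auto simp: U_def)
    then have "sum r (U - {j}) - sum p' (U - {j}) \<le> sum r U - sum p' U" using dema by (simp add: demand_def)
    moreover have "sum r U = r j + sum r (U - {j})" "sum p' U = p' j + sum p' (U - {j})"
      using finU j by (simp_all add: sum.remove)
    ultimately show ?thesis by linarith
  qed
  have high: "r j \<le> p' j" if j: "j \<in> Om" "j \<notin> U" for j
  proof -
    have "insert j U \<subseteq> Om" using j by (auto simp: U_def)
    then have "sum r (insert j U) - sum p' (insert j U) \<le> sum r U - sum p' U" using dema by (simp add: demand_def)
    then show ?thesis using finU j by simp
  qed
  have rp: "\<forall>j\<in>Om. r j \<le> p j"
  proof
    fix j assume j: "j \<in> Om"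
    show "r j \<le> p j"
    proof (cases "j \<in> U")
      case True then show ?thesis using pU by (simp add: U_def)
    next
      case False
      then have "j \<in> (\<Union>b\<in>B. A b)" using j by (simp add: U_def)
      then show ?thesis using high[OF j False] pp by simp
    qed
  qed
  have pge: "\<forall>j\<in>Om. p' j \<le> p j"
  proof
    fix j assume j: "j \<in> Om"
    show "p' j \<le> p j"
    proof (cases "j \<in> U")
      case True then show ?thesis using pU low[OF True] by (simp add: U_def)
    next
      case False
      then have "j \<in> (\<Union>b\<in>B. A b)" using j by (simp add: U_def)
      then have "p' j = p j" using pp by blast
      then show ?thesis by simp
    qed
  qed
  have "A b \<in> demand Om (v b) p" if b: "b \<in> B" for b
  proof -
    have D: "A b \<in> demand Om (v b) p'" using demb[OF b] .
    have eqA: "sum p (A b) = sum p' (A b)" using pp b by (intro sum.cong) auto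
    have "v b T - sum p T \<le> v b (A b) - sum p (A b)" if T: "T \<subseteq> Om" for T
    proof -
      have "sum p' T \<le> sum p T" using pge T by (intro sum_mono) auto
      moreover have "v b T - sum p' T \<le> v b (A b) - sum p' (A b)" using D T by (simp add: demand_def)
      ultimately show ?thesis using eqA by linarith
    qed
    then show ?thesis using AO b by (simp add: demand_def)
  qed
  then show ?L using A rp pU by (simp add: walrasian_eq_reserve_def envy_free_def)
qed

definition xA :: "('b \<Rightarrow> 'i set) \<Rightarrow> 'b \<Rightarrow> 'i set \<Rightarrow> real" where
  "xA A = (\<lambda>b S. if S = A b then 1 else 0)"

lemma load_xA:
  assumes "finite Om" "A b \<subseteq> Om"
  shows "(\<Sum>S\<in>{S. S \<subseteq> Om \<and> j \<in> S}. xA A b S) = (if j \<in> A b then 1 else 0)"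
proof -
  have fin: "finite {S. S \<subseteq> Om \<and> j \<in> S}" by (rule finite_subset[of _ "Pow Om"]) (auto simp: assms(1))
  have "(\<Sum>S\<in>{S. S \<subseteq> Om \<and> j \<in> S}. xA A b S) = (\<Sum>S\<in>{S. S \<subseteq> Om \<and> j \<in> S}. if A b = S then 1 else 0)"
    by (rule sum.cong) (auto simp: xA_def)
  also have "\<dots> = (if j \<in> A b then 1 else 0)" using fin assms(2) by (simp add: sum.delta)
  finally show ?thesis .
qed

lemma indicator_disj_sum:
  assumes "finite B" "\<forall>b\<in>B. \<forall>c\<in>B. b \<noteq> c \<longrightarrow> A b \<inter> A c = {}"
  shows "(\<Sum>b\<in>B. (if j \<in> A b then 1 else 0 :: real)) = (if j \<in> (\<Union>b\<in>B. A b) then 1 else 0)"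
proof (cases "j \<in> (\<Union>b\<in>B. A b)")
  case True
  then obtain b0 where b0: "b0 \<in> B" "j \<in> A b0" by auto
  have "(\<Sum>b\<in>B. (if j \<in> A b then 1 else 0 :: real)) = (\<Sum>b\<in>B. if b0 = b then 1 else 0)"
    using assms(2) b0 by (intro sum.cong) auto
  then show ?thesis using b0 True assms(1) by simp
next
  case False
  then show ?thesis by auto
qed

lemma load_xA_total:
  assumes f: "finite Om" "finite B" and A: "is_allocation Om B A"
  shows "(\<Sum>b\<in>B. \<Sum>S\<in>{S. S \<subseteq> Om \<and> j \<in> S}. xA A b S) = (if j \<in> (\<Union>b\<in>B. A b) then 1 else 0)"
proof -
  have "(\<Sum>b\<in>B. \<Sum>S\<in>{S. S \<subseteq> Om \<and> j \<in> S}. xA A b S) = (\<Sum>b\<in>B. (if j \<in> A b then 1 else 0 :: real))"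
    using A f by (intro sum.cong) (auto simp: load_xA is_allocation_def)
  also have "\<dots> = (if j \<in> (\<Union>b\<in>B. A b) then 1 else 0)"
    using A f by (intro indicator_disj_sum) (auto simp: is_allocation_def)
  finally show ?thesis .
qed

lemma xA_feasible:
  assumes f: "finite Om" "finite B" and A: "is_allocation Om B A"
  shows "lp_feasible Om B (xA A)"
proof -
  have "(\<Sum>S\<in>Pow Om. xA A b S) \<le> 1" if "b \<in> B" for b
  proof -
    have "(\<Sum>S\<in>Pow Om. xA A b S) = (\<Sum>S\<in>Pow Om. if A b = S then 1 else 0)"
      by (rule sum.cong) (auto simp: xA_def)
    then show ?thesis using f by simp
  qed
  then show ?thesis unfolding lp_feasible_def
    using load_xA_total[OF f A] by (auto simp: xA_def)
qed

lemma obj_xA: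
  assumes f: "finite Om" "finite B" and A: "is_allocation Om B A"
  shows "lp_objective Om B v r (xA A) = W Om B v r A"
proof -
  have AO: "\<forall>b\<in>B. A b \<subseteq> Om" using A by (simp add: is_allocation_def)
  have t1: "(\<Sum>S\<in>Pow Om. xA A b S * v b S) = v b (A b)" if "b \<in> B" for b
  proof -
    have "(\<Sum>S\<in>Pow Om. xA A b S * v b S) = (\<Sum>S\<in>Pow Om. if A b = S then v b S else 0)"
      by (rule sum.cong) (auto simp: xA_def)
    then show ?thesis using f AO that by simp
  qed
  have t2: "(\<Sum>j\<in>Om. (1 - (\<Sum>b\<in>B. \<Sum>S\<in>{S. S \<subseteq> Om \<and> j \<in> S}. xA A b S)) * r j)
      = (\<Sum>j\<in>Om. if j \<in> Om - (\<Union>b\<in>B. A b) then r j else 0)"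
    by (rule sum.cong) (auto simp: load_xA_total[OF f A])
  also have "\<dots> = sum r (Om - (\<Union>b\<in>B. A b))"
    using f by (simp add: sum.If_cases) (rule arg_cong[where f="sum r"]; auto)
  finally show ?thesis unfolding lp_objective_def W_def using t1 by simp
qed




lemma mult_sum_if: "(c::real) * (\<Sum>j\<in>A. if P j then f j else 0) = (\<Sum>j\<in>A. if P j then c * f j else 0)"
  unfolding sum_distrib_left by (rule sum.cong) simp_all

lemma swap_price_load:
  fixes y :: "'b \<Rightarrow> 'i set \<Rightarrow> real" and p :: "'i \<Rightarrow> real"
  assumes f: "finite Om" "finite B"
  shows "(\<Sum>b\<in>B. \<Sum>S\<in>Pow Om. y b S * sum p S) = (\<Sum>j\<in>Om. p j * (\<Sum>b\<in>B. \<Sum>S\<in>{S. S \<subseteq> Om \<and> j \<in> S}. y b S))"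
proof -
  have "(\<Sum>b\<in>B. \<Sum>S\<in>Pow Om. y b S * sum p S) = (\<Sum>b\<in>B. \<Sum>S\<in>Pow Om. \<Sum>j\<in>Om. if j \<in> S then y b S * p j else 0)"
  proof (intro sum.cong refl)
    fix b S assume S: "S \<in> Pow Om"
    have "sum p S = sum p (Om \<inter> S)" using S by (simp add: Int_absorb1)
    also have "\<dots> = (\<Sum>j\<in>Om. if j \<in> S then p j else 0)" using f by (simp add: sum.inter_restrict)
    finally have "y b S * sum p S = y b S * (\<Sum>j\<in>Om. if j \<in> S then p j else 0)" by simp
    also have "\<dots> = (\<Sum>j\<in>Om. if j \<in> S then y b S * p j else 0)"
      by (rule mult_sum_if)
    finally show "y b S * sum p S = (\<Sum>j\<in>Om. if j \<in> S then y b S * p j else 0)" .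
  qed
  also have "\<dots> = (\<Sum>b\<in>B. \<Sum>j\<in>Om. \<Sum>S\<in>Pow Om. if j \<in> S then y b S * p j else 0)"
    by (rule sum.cong[OF refl], rule sum.swap)
  also have "\<dots> = (\<Sum>j\<in>Om. \<Sum>b\<in>B. \<Sum>S\<in>Pow Om. if j \<in> S then y b S * p j else 0)"
    by (rule sum.swap)
  also have "\<dots> = (\<Sum>j\<in>Om. p j * (\<Sum>b\<in>B. \<Sum>S\<in>{S. S \<subseteq> Om \<and> j \<in> S}. y b S))"
  proof (intro sum.cong refl)
    fix j assume j: "j \<in> Om"
    have "(\<Sum>S\<in>Pow Om. if j \<in> S then y b S * p j else 0) = p j * (\<Sum>S\<in>{S. S \<subseteq> Om \<and> j \<in> S}. y b S)" for b
    proof -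
      have e: "{S. S \<subseteq> Om \<and> j \<in> S} = {S\<in>Pow Om. j \<in> S}" by auto
      have "(\<Sum>S\<in>{S\<in>Pow Om. j \<in> S}. y b S * p j) = (\<Sum>S\<in>Pow Om. if j \<in> S then y b S * p j else 0)"
        using f by (intro sum.inter_filter) auto
      then show ?thesis unfolding e by (simp add: sum_distrib_left mult.commute)
    qed
    then show "(\<Sum>b\<in>B. \<Sum>S\<in>Pow Om. if j \<in> S then y b S * p j else 0) = p j * (\<Sum>b\<in>B. \<Sum>S\<in>{S. S \<subseteq> Om \<and> j \<in> S}. y b S)"
      by (simp add: sum_distrib_left)
  qed
  finally show ?thesis .
qed

lemma weak_dual:
  assumes f: "finite Om" "finite B" and A: "is_allocation Om B A"
    and v0: "\<forall>b\<in>B. v b {} = 0"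
    and rp: "\<forall>j\<in>Om. r j \<le> p j" and pU: "\<forall>j\<in>Om - (\<Union>b\<in>B. A b). p j = r j" and d0: "0 \<le> d"
    and ap: "\<forall>b\<in>B. \<forall>S. S \<subseteq> Om \<longrightarrow> v b S - sum p S \<le> v b (A b) - sum p (A b) + d"
    and y: "lp_feasible Om B y"
  shows "lp_objective Om B v r y \<le> W Om B v r A + real (card B) * d"
proof -
  define u where "u b = v b (A b) - sum p (A b) + d" for b
  define ld where "ld j = (\<Sum>b\<in>B. \<Sum>S\<in>{S. S \<subseteq> Om \<and> j \<in> S}. y b S)" for j
  have y0: "\<forall>b\<in>B. \<forall>S. S \<subseteq> Om \<longrightarrow> 0 \<le> y b S" and ld1: "\<forall>j\<in>Om. ld j \<le> 1"
    and ys: "\<forall>b\<in>B. (\<Sum>S\<in>Pow Om. y b S) \<le> 1"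
    using y by (auto simp: lp_feasible_def ld_def)
  have u0: "0 \<le> u b" if "b \<in> B" for b
    using ap that v0 by (force simp: u_def)
  have step1: "(\<Sum>S\<in>Pow Om. y b S * v b S) \<le> u b + (\<Sum>S\<in>Pow Om. y b S * sum p S)" if b: "b \<in> B" for b
  proof -
    have "(\<Sum>S\<in>Pow Om. y b S * v b S) \<le> (\<Sum>S\<in>Pow Om. y b S * (u b + sum p S))"
    proof (rule sum_mono)
      fix S assume "S \<in> Pow Om"
      then have S: "S \<subseteq> Om" by simp
      have "v b S - sum p S \<le> v b (A b) - sum p (A b) + d" using ap b S by blast
      then have "v b S \<le> u b + sum p S" by (simp add: u_def)
      moreover have "0 \<le> y b S" using y0 b S by blast
      ultimately show "y b S * v b S \<le> y b S * (u b + sum p S)" by (simp add: mult_left_mono)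
    qed
    also have "\<dots> = (\<Sum>S\<in>Pow Om. u b * y b S + y b S * sum p S)"
      by (rule sum.cong) (simp_all add: distrib_left mult.commute)
    also have "\<dots> = u b * (\<Sum>S\<in>Pow Om. y b S) + (\<Sum>S\<in>Pow Om. y b S * sum p S)"
      by (simp only: sum.distrib sum_distrib_left)
    also have "\<dots> \<le> u b + (\<Sum>S\<in>Pow Om. y b S * sum p S)"
    proof -
      have "u b * (\<Sum>S\<in>Pow Om. y b S) \<le> u b * 1"
        using ys b u0[OF b] by (intro mult_left_mono) auto
      then show ?thesis by linarith
    qed
    finally show ?thesis .
  qed
  have step2: "(\<Sum>b\<in>B. \<Sum>S\<in>Pow Om. y b S * sum p S) = (\<Sum>j\<in>Om. p j * ld j)"
    unfolding ld_def by (rule swap_price_load[OF f])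
  have step3: "(\<Sum>j\<in>Om. p j * ld j) + (\<Sum>j\<in>Om. (1 - ld j) * r j) \<le> sum p Om"
  proof -
    have "(\<Sum>j\<in>Om. p j * ld j) + (\<Sum>j\<in>Om. (1 - ld j) * r j) = (\<Sum>j\<in>Om. p j * ld j + (1 - ld j) * r j)"
      by (simp add: sum.distrib)
    also have "\<dots> \<le> sum p Om"
    proof (rule sum_mono)
      fix j assume j: "j \<in> Om"
      have "(1 - ld j) * (r j - p j) \<le> 0" using ld1 rp j by (intro mult_nonneg_nonpos) auto
      moreover have "(1 - ld j) * (r j - p j) = p j * ld j + (1 - ld j) * r j - p j"
        by (simp add: left_diff_distrib right_diff_distrib)
      ultimately show "p j * ld j + (1 - ld j) * r j \<le> p j" by linarith
    qed
    finally show ?thesis .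
  qed
  have obj: "lp_objective Om B v r y = (\<Sum>b\<in>B. \<Sum>S\<in>Pow Om. y b S * v b S) + (\<Sum>j\<in>Om. (1 - ld j) * r j)"
    by (simp add: lp_objective_def ld_def)
  have s1: "(\<Sum>b\<in>B. \<Sum>S\<in>Pow Om. y b S * v b S) \<le> (\<Sum>b\<in>B. u b) + (\<Sum>b\<in>B. \<Sum>S\<in>Pow Om. y b S * sum p S)"
  proof -
    have "(\<Sum>b\<in>B. \<Sum>S\<in>Pow Om. y b S * v b S) \<le> (\<Sum>b\<in>B. u b + (\<Sum>S\<in>Pow Om. y b S * sum p S))"
      by (rule sum_mono) (rule step1)
    then show ?thesis by (simp only: sum.distrib)
  qed
  have su: "(\<Sum>b\<in>B. u b) = (\<Sum>b\<in>B. v b (A b)) - (\<Sum>b\<in>B. sum p (A b)) + real (card B) * d"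
    by (simp add: u_def sum.distrib sum_subtractf)
  have rU: "sum r (Om - (\<Union>b\<in>B. A b)) = sum p (Om - (\<Union>b\<in>B. A b))" using pU by (intro sum.cong) auto
  have sa: "sum p Om = (\<Sum>b\<in>B. sum p (A b)) + sum p (Om - (\<Union>b\<in>B. A b))" using sum_alloc[OF A f] .
  show ?thesis using obj s1 step2 step3 su rU sa unfolding W_def by linarith
qed

lemma a2_forward:
  assumes f: "finite Om" "finite B" and v0: "\<forall>b\<in>B. v b {} = 0"
    and we: "walrasian_eq_reserve Om B v r A p"
  shows "lp_optimal Om B v r (xA A)"
proof -
  have A: "is_allocation Om B A" using we by (simp add: walrasian_eq_reserve_def)
  have ap: "\<forall>b\<in>B. \<forall>S. S \<subseteq> Om \<longrightarrow> v b S - sum p S \<le> v b (A b) - sum p (A b) + 0"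
    using we by (auto simp: walrasian_eq_reserve_def envy_free_def demand_def)
  show ?thesis unfolding lp_optimal_def
  proof (intro conjI allI impI)
    show "lp_feasible Om B (xA A)" using xA_feasible[OF f A] .
    fix y assume y: "lp_feasible Om B y"
    have rp: "\<forall>j\<in>Om. r j \<le> p j" and pU: "\<forall>j\<in>Om - (\<Union>b\<in>B. A b). p j = r j"
      using we by (auto simp: walrasian_eq_reserve_def)
    have "lp_objective Om B v r y \<le> W Om B v r A + real (card B) * 0"
      using weak_dual[of Om B A v r p 0 y, OF f A v0 rp pU _ ap y] by simp
    then show "lp_objective Om B v r y \<le> lp_objective Om B v r (xA A)"
      using obj_xA[OF f A] by simp
  qed
qed




lemma ind_sum:
  fixes x :: "'i \<Rightarrow> real"
  assumes "finite Om" "X \<subseteq> Om"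
  shows "(\<Sum>w\<in>Om. (if w \<in> X then 1 else 0) * x w) = sum x X"
proof -
  have "(\<Sum>w\<in>Om. (if w \<in> X then 1 else 0) * x w) = (\<Sum>w\<in>Om. if w \<in> X then x w else 0)"
    by (rule sum.cong) auto
  also have "\<dots> = sum x (Om \<inter> X)" using assms(1) by (simp add: sum.inter_restrict)
  also have "Om \<inter> X = X" using assms(2) by auto
  finally show ?thesis .
qed

lemma delta_sum:
  fixes x :: "'i \<Rightarrow> real"
  assumes "finite Om" "j \<in> Om"
  shows "(\<Sum>w\<in>Om. (if w = j then c else 0) * x w) = c * x j"
proof -
  have "(\<Sum>w\<in>Om. (if w = j then c else 0) * x w) = (\<Sum>w\<in>Om. if j = w then c * x w else 0)"
    by (rule sum.cong) auto
  then show ?thesis using assms by simp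
qed

lemma delta_sum2:
  fixes x :: "'i \<Rightarrow> real"
  assumes "finite U"
  shows "(\<Sum>w\<in>U. x w * (if j = w then c else 0)) = (if j \<in> U then x j * c else 0)"
proof -
  have "(\<Sum>w\<in>U. x w * (if j = w then c else 0)) = (\<Sum>w\<in>U. if j = w then x w * c else 0)"
    by (rule sum.cong) auto
  then show ?thesis using assms by simp
qed

lemma filter_sum:
  fixes f :: "'i set \<Rightarrow> real"
  assumes "finite Om"
  shows "(\<Sum>S\<in>Pow Om. f S * (if j \<in> S then 1 else 0)) = (\<Sum>S\<in>{S. S \<subseteq> Om \<and> j \<in> S}. f S)"
proof -
  have e: "{S. S \<subseteq> Om \<and> j \<in> S} = {S\<in>Pow Om. j \<in> S}" by auto
  have "(\<Sum>S\<in>{S\<in>Pow Om. j \<in> S}. f S) = (\<Sum>S\<in>Pow Om. if j \<in> S then f S else 0)"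
    using assms by (intro sum.inter_filter) auto
  also have "\<dots> = (\<Sum>S\<in>Pow Om. f S * (if j \<in> S then 1 else 0))" by (rule sum.cong) auto
  finally show ?thesis unfolding e by simp
qed

lemma lp_obj_lin:
  fixes x z :: "'b \<Rightarrow> 'i set \<Rightarrow> real"
  shows "lp_objective Om B v r (\<lambda>b S. x b S + e * z b S) = lp_objective Om B v r x +
    e * ((\<Sum>b\<in>B. \<Sum>S\<in>Pow Om. z b S * v b S) - (\<Sum>j\<in>Om. (\<Sum>b\<in>B. \<Sum>S\<in>{S. S \<subseteq> Om \<and> j \<in> S}. z b S) * r j))"
proof -
  define lx where "lx j = (\<Sum>b\<in>B. \<Sum>S\<in>{S. S \<subseteq> Om \<and> j \<in> S}. x b S)" for j
  define lz where "lz j = (\<Sum>b\<in>B. \<Sum>S\<in>{S. S \<subseteq> Om \<and> j \<in> S}. z b S)" for j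
  have l: "(\<Sum>b\<in>B. \<Sum>S\<in>{S. S \<subseteq> Om \<and> j \<in> S}. x b S + e * z b S) = lx j + e * lz j" for j
    by (simp add: lx_def lz_def sum.distrib sum_distrib_left)
  have a: "(\<Sum>b\<in>B. \<Sum>S\<in>Pow Om. (x b S + e * z b S) * v b S) =
      (\<Sum>b\<in>B. \<Sum>S\<in>Pow Om. x b S * v b S) + e * (\<Sum>b\<in>B. \<Sum>S\<in>Pow Om. z b S * v b S)"
    by (simp add: distrib_right sum.distrib sum_distrib_left mult.assoc)
  have c: "(\<Sum>j\<in>Om. (1 - (lx j + e * lz j)) * r j) = (\<Sum>j\<in>Om. (1 - lx j) * r j) - e * (\<Sum>j\<in>Om. lz j * r j)"
  proof -
    have "(\<Sum>j\<in>Om. (1 - (lx j + e * lz j)) * r j) = (\<Sum>j\<in>Om. (1 - lx j) * r j - e * (lz j * r j))"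
      by (rule sum.cong) (simp_all add: algebra_simps)
    then show ?thesis by (simp add: sum_subtractf sum_distrib_left)
  qed
  have o1: "lp_objective Om B v r (\<lambda>b S. x b S + e * z b S) =
      (\<Sum>b\<in>B. \<Sum>S\<in>Pow Om. (x b S + e * z b S) * v b S) + (\<Sum>j\<in>Om. (1 - (lx j + e * lz j)) * r j)"
    unfolding lp_objective_def l by simp
  have o2: "lp_objective Om B v r x = (\<Sum>b\<in>B. \<Sum>S\<in>Pow Om. x b S * v b S) + (\<Sum>j\<in>Om. (1 - lx j) * r j)"
    unfolding lp_objective_def lx_def by simp
  have q: "(\<Sum>j\<in>Om. (\<Sum>b\<in>B. \<Sum>S\<in>{S. S \<subseteq> Om \<and> j \<in> S}. z b S) * r j) = (\<Sum>j\<in>Om. lz j * r j)"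
    by (simp add: lz_def)
  show ?thesis unfolding q o1 o2 a c by (simp add: right_diff_distrib)
qed

lemma a2_backward:
  fixes v :: "'b \<Rightarrow> 'i set \<Rightarrow> real"
  assumes f: "finite Om" "finite B" and A: "is_allocation Om B A"
    and opt: "lp_optimal Om B v r (xA A)"
  shows "\<exists>p. walrasian_eq_reserve Om B v r A p"
proof (rule ccontr)
  assume nex: "\<not> (\<exists>p. walrasian_eq_reserve Om B v r A p)"
  define U where "U = Om - (\<Union>b\<in>B. A b)"
  have AO: "\<forall>b\<in>B. A b \<subseteq> Om" using A by (simp add: is_allocation_def)
  have finU: "finite U" using f by (simp add: U_def)
  have UO: "U \<subseteq> Om" by (auto simp: U_def)
  define I :: "('i + ('i + ('b \<times> 'i set))) set" where "I = Om <+> (U <+> (B \<times> Pow Om))"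
  define co :: "('i + ('i + ('b \<times> 'i set))) \<Rightarrow> 'i \<Rightarrow> real" where
    "co = case_sum (\<lambda>j w. if w = j then -1 else 0) (case_sum (\<lambda>j w. if w = j then 1 else 0)
          (\<lambda>(b,S) w. (if w \<in> A b then 1 else 0) - (if w \<in> S then 1 else 0)))"
  define bb :: "('i + ('i + ('b \<times> 'i set))) \<Rightarrow> real" where
    "bb = case_sum (\<lambda>j. - r j) (case_sum (\<lambda>j. r j) (\<lambda>(b,S). v b (A b) - v b S))"
  have finI: "finite I" using f finU by (simp add: I_def)
  have memI: "Inl j \<in> I \<longleftrightarrow> j \<in> Om" "Inr (Inl j) \<in> I \<longleftrightarrow> j \<in> U"
      "Inr (Inr (b,S)) \<in> I \<longleftrightarrow> b \<in> B \<and> S \<in> Pow Om" for j b S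
    by (auto simp: I_def)
  have sumI: "(\<Sum>i\<in>I. h i) = (\<Sum>j\<in>Om. h (Inl j)) + (\<Sum>j\<in>U. h (Inr (Inl j))) + (\<Sum>b\<in>B. \<Sum>S\<in>Pow Om. h (Inr (Inr (b,S))))"
    for h :: "('i + ('i + ('b \<times> 'i set))) \<Rightarrow> real"
    unfolding I_def using f finU by (simp add: sum.Plus sum.cartesian_product' o_def)
  have infeas: "\<not> (\<exists>x. \<forall>i\<in>I. (\<Sum>w\<in>Om. co i w * x w) \<le> bb i)"
  proof
    assume "\<exists>x. \<forall>i\<in>I. (\<Sum>w\<in>Om. co i w * x w) \<le> bb i"
    then obtain x where hx: "\<forall>i\<in>I. (\<Sum>w\<in>Om. co i w * x w) \<le> bb i" by blast
    have rp: "\<forall>j\<in>Om. r j \<le> x j"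
    proof
      fix j assume j: "j \<in> Om"
      then have "Inl j \<in> I" by (simp add: memI)
      then have "(\<Sum>w\<in>Om. co (Inl j) w * x w) \<le> bb (Inl j)" using hx by blast
      then have "(\<Sum>w\<in>Om. (if w = j then -1 else 0) * x w) \<le> - r j" by (simp add: co_def bb_def)
      then show "r j \<le> x j" using delta_sum[OF f(1) j, of "-1" x] by simp
    qed
    have pU: "\<forall>j\<in>U. x j = r j"
    proof
      fix j assume j: "j \<in> U"
      then have "Inr (Inl j) \<in> I" by (simp add: memI)
      then have "(\<Sum>w\<in>Om. co (Inr (Inl j)) w * x w) \<le> bb (Inr (Inl j))" using hx by blast
      then have "(\<Sum>w\<in>Om. (if w = j then 1 else 0) * x w) \<le> r j" by (simp add: co_def bb_def)
      then have "x j \<le> r j" using delta_sum[OF f(1), of j 1 x] j UO by auto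
      then show "x j = r j" using rp j UO by force
    qed
    have dem: "A b \<in> demand Om (v b) x" if b: "b \<in> B" for b
    proof -
      have "v b T - sum x T \<le> v b (A b) - sum x (A b)" if T: "T \<subseteq> Om" for T
      proof -
        have "Inr (Inr (b, T)) \<in> I" using b T by (simp add: memI)
        then have "(\<Sum>w\<in>Om. co (Inr (Inr (b, T))) w * x w) \<le> bb (Inr (Inr (b, T)))" using hx by blast
        then have h: "(\<Sum>w\<in>Om. ((if w \<in> A b then 1 else 0) - (if w \<in> T then 1 else 0)) * x w) \<le> v b (A b) - v b T"
          by (simp add: co_def bb_def)
        have "(\<Sum>w\<in>Om. ((if w \<in> A b then 1 else 0) - (if w \<in> T then 1 else 0)) * x w)
            = (\<Sum>w\<in>Om. (if w \<in> A b then 1 else 0) * x w) - (\<Sum>w\<in>Om. (if w \<in> T then 1 else 0) * x w)"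
          by (simp add: left_diff_distrib sum_subtractf)
        also have "\<dots> = sum x (A b) - sum x T" using ind_sum[OF f(1)] AO b T by simp
        finally show ?thesis using h by simp
      qed
      then show ?thesis using AO b by (simp add: demand_def)
    qed
    have "walrasian_eq_reserve Om B v r A x"
      using A rp pU dem by (simp add: walrasian_eq_reserve_def envy_free_def U_def)
    then show False using nex by blast
  qed
  obtain l where l0: "\<forall>i\<in>I. 0 \<le> l i" and lV: "\<forall>w\<in>Om. (\<Sum>i\<in>I. l i * co i w) = 0"
    and ln: "(\<Sum>i\<in>I. l i * bb i) < 0"
    using farkas_idx[OF f(1) finI infeas] by blast
  define al where "al j = l (Inl j)" for j
  define be where "be j = l (Inr (Inl j))" for j
  define ga where "ga b S = l (Inr (Inr (b, S)))" for b S
  define be' where "be' j = (if j \<in> U then be j else 0)" for j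
  have al0: "\<forall>j\<in>Om. 0 \<le> al j" using l0 by (simp add: al_def memI)
  have be0: "\<forall>j\<in>U. 0 \<le> be j" using l0 by (simp add: be_def memI)
  have ga0: "\<forall>b\<in>B. \<forall>S\<in>Pow Om. 0 \<le> ga b S" using l0 by (simp add: ga_def memI)
  have C1: "- al j + be' j + (\<Sum>b\<in>B. \<Sum>S\<in>Pow Om. ga b S * ((if j \<in> A b then 1 else 0) - (if j \<in> S then 1 else 0))) = 0"
    if j: "j \<in> Om" for j
  proof -
    have "(\<Sum>i\<in>I. l i * co i j) = 0" using lV j by blast
    then have "(\<Sum>j'\<in>Om. al j' * (if j = j' then -1 else 0)) + (\<Sum>j'\<in>U. be j' * (if j = j' then 1 else 0))
       + (\<Sum>b\<in>B. \<Sum>S\<in>Pow Om. ga b S * ((if j \<in> A b then 1 else 0) - (if j \<in> S then 1 else 0))) = 0"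
      unfolding sumI by (simp add: co_def al_def be_def ga_def)
    moreover have "(\<Sum>j'\<in>Om. al j' * (if j = j' then -1 else 0)) = - al j"
      using delta_sum2[OF f(1), of al j "-1"] j by simp
    moreover have "(\<Sum>j'\<in>U. be j' * (if j = j' then 1 else 0)) = be' j"
      using delta_sum2[OF finU, of be j 1] by (simp add: be'_def)
    ultimately show ?thesis by linarith
  qed
  have C2: "(\<Sum>j\<in>Om. al j * (- r j)) + (\<Sum>j\<in>U. be j * r j) + (\<Sum>b\<in>B. \<Sum>S\<in>Pow Om. ga b S * (v b (A b) - v b S)) < 0"
    using ln unfolding sumI by (simp add: bb_def al_def be_def ga_def)
  define g where "g b = (\<Sum>S\<in>Pow Om. ga b S)" for b
  have g0: "\<forall>b\<in>B. 0 \<le> g b"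
  proof
    fix b assume b: "b \<in> B"
    show "0 \<le> g b" unfolding g_def using ga0 b by (intro sum_nonneg) auto
  qed
  define E where "E = 1 + (\<Sum>b\<in>B. g b) + (\<Sum>j\<in>U. be j)"
  have SB0: "0 \<le> (\<Sum>b\<in>B. g b)" using g0 by (intro sum_nonneg) auto
  have SU0: "0 \<le> (\<Sum>j\<in>U. be j)" using be0 by (intro sum_nonneg) auto
  have Epos: "E \<ge> 1" using SB0 SU0 by (simp add: E_def)
  define eps where "eps = 1 / E"
  have eps0: "0 < eps" using Epos by (simp add: eps_def)
  have epsg: "eps * g b \<le> 1" if "b \<in> B" for b
  proof -
    have "g b \<le> (\<Sum>b\<in>B. g b)" using g0 that f(2) by (intro member_le_sum) auto
    then have "g b \<le> E" using SU0 by (simp add: E_def)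
    then show ?thesis using Epos by (simp add: eps_def divide_simps)
  qed
  have epsb: "eps * be j \<le> 1" if "j \<in> U" for j
  proof -
    have "be j \<le> (\<Sum>j\<in>U. be j)" using be0 that finU by (intro member_le_sum) auto
    then have "be j \<le> E" using SB0 by (simp add: E_def)
    then show ?thesis using Epos by (simp add: eps_def divide_simps)
  qed
  define z where "z b S = ga b S - (if S = A b then g b else 0)" for b S
  define y where "y = (\<lambda>b S. xA A b S + eps * z b S)"
  define zl where "zl j = (\<Sum>b\<in>B. \<Sum>S\<in>{S. S \<subseteq> Om \<and> j \<in> S}. z b S)" for j
  have finK: "finite {S. S \<subseteq> Om \<and> j \<in> S}" for j
    by (rule finite_subset[of _ "Pow Om"]) (auto simp: f(1))
  have zl_eq: "zl j = be' j - al j" if j: "j \<in> Om" for j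
  proof -
    have k1: "(\<Sum>S\<in>{S. S \<subseteq> Om \<and> j \<in> S}. z b S) = (\<Sum>S\<in>{S. S \<subseteq> Om \<and> j \<in> S}. ga b S) - (if j \<in> A b then g b else 0)"
      if b: "b \<in> B" for b
    proof -
      have "(\<Sum>S\<in>{S. S \<subseteq> Om \<and> j \<in> S}. (if S = A b then g b else 0)) = (\<Sum>S\<in>{S. S \<subseteq> Om \<and> j \<in> S}. (if A b = S then g b else 0))"
        by (rule sum.cong) auto
      also have "\<dots> = (if j \<in> A b then g b else 0)" using finK[of j] AO b by simp
      finally show ?thesis by (simp add: z_def sum_subtractf)
    qed
    have k2: "(\<Sum>S\<in>Pow Om. ga b S * ((if j \<in> A b then 1 else 0) - (if j \<in> S then 1 else 0)))
        = (if j \<in> A b then g b else 0) - (\<Sum>S\<in>{S. S \<subseteq> Om \<and> j \<in> S}. ga b S)" for b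
    proof -
      have "(\<Sum>S\<in>Pow Om. ga b S * ((if j \<in> A b then 1 else 0) - (if j \<in> S then 1 else 0)))
          = (\<Sum>S\<in>Pow Om. ga b S * (if j \<in> A b then 1 else 0)) - (\<Sum>S\<in>Pow Om. ga b S * (if j \<in> S then 1 else 0))"
        by (simp add: right_diff_distrib sum_subtractf)
      also have "\<dots> = (if j \<in> A b then g b else 0) - (\<Sum>S\<in>{S. S \<subseteq> Om \<and> j \<in> S}. ga b S)"
        using filter_sum[OF f(1), of "ga b" j] by (simp add: g_def sum_distrib_right[symmetric])
      finally show ?thesis .
    qed
    have "zl j = (\<Sum>b\<in>B. (\<Sum>S\<in>{S. S \<subseteq> Om \<and> j \<in> S}. ga b S) - (if j \<in> A b then g b else 0))"
      unfolding zl_def by (rule sum.cong) (simp_all add: k1)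
    also have "\<dots> = - (\<Sum>b\<in>B. \<Sum>S\<in>Pow Om. ga b S * ((if j \<in> A b then 1 else 0) - (if j \<in> S then 1 else 0)))"
      by (simp add: k2 sum_subtractf)
    also have "\<dots> = be' j - al j" using C1[OF j] by linarith
    finally show ?thesis .
  qed
  have feas: "lp_feasible Om B y"
    unfolding lp_feasible_def
  proof (intro conjI ballI allI impI)
    fix b S assume b: "b \<in> B" and S: "S \<subseteq> Om"
    show "0 \<le> y b S"
    proof (cases "S = A b")
      case True
      have "ga b S \<ge> 0" using ga0 b S by auto
      then have "eps * z b S \<ge> - (eps * g b)" using eps0 True by (simp add: z_def algebra_simps)
      then show ?thesis using epsg[OF b] True by (simp add: y_def xA_def)
    next
      case False
      then show ?thesis using ga0 b S eps0 by (simp add: y_def xA_def z_def)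
    qed
  next
    fix b assume b: "b \<in> B"
    have s1: "(\<Sum>S\<in>Pow Om. xA A b S) = 1"
    proof -
      have "(\<Sum>S\<in>Pow Om. xA A b S) = (\<Sum>S\<in>Pow Om. if A b = S then 1 else 0)"
        by (rule sum.cong) (auto simp: xA_def)
      then show ?thesis using f AO b by simp
    qed
    have s2: "(\<Sum>S\<in>Pow Om. z b S) = 0"
    proof -
      have "(\<Sum>S\<in>Pow Om. (if S = A b then g b else 0)) = (\<Sum>S\<in>Pow Om. (if A b = S then g b else 0))"
        by (rule sum.cong) auto
      also have "\<dots> = g b" using f AO b by simp
      finally show ?thesis by (simp add: z_def sum_subtractf g_def)
    qed
    show "(\<Sum>S\<in>Pow Om. y b S) \<le> 1"
      using s1 s2 by (simp add: y_def sum.distrib sum_distrib_left[symmetric])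
  next
    fix j assume j: "j \<in> Om"
    have "(\<Sum>b\<in>B. \<Sum>S\<in>{S. S \<subseteq> Om \<and> j \<in> S}. y b S)
        = (\<Sum>b\<in>B. \<Sum>S\<in>{S. S \<subseteq> Om \<and> j \<in> S}. xA A b S) + eps * zl j"
      by (simp add: y_def zl_def sum.distrib sum_distrib_left)
    also have "\<dots> = (if j \<in> (\<Union>b\<in>B. A b) then 1 else 0) + eps * (be' j - al j)"
      using load_xA_total[OF f A] zl_eq[OF j] by simp
    also have "\<dots> \<le> 1"
    proof (cases "j \<in> (\<Union>b\<in>B. A b)")
      case True
      then have "be' j = 0" by (simp add: be'_def U_def)
      then show ?thesis using True al0 j eps0 by (simp add: mult_nonneg_nonneg)
    next
      case False
      then have jU: "j \<in> U" using j by (simp add: U_def)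
      have "eps * (be j - al j) \<le> eps * be j" using al0 j eps0 by (simp add: mult_left_mono)
      then show ?thesis using False jU epsb[OF jU] by (simp add: be'_def)
    qed
    finally show "(\<Sum>b\<in>B. \<Sum>S\<in>{S. S \<subseteq> Om \<and> j \<in> S}. y b S) \<le> 1" .
  qed
  have objy: "lp_objective Om B v r y = lp_objective Om B v r (xA A) +
      eps * ((\<Sum>b\<in>B. \<Sum>S\<in>Pow Om. z b S * v b S) - (\<Sum>j\<in>Om. zl j * r j))"
    unfolding y_def zl_def by (rule lp_obj_lin)
  have zv: "(\<Sum>b\<in>B. \<Sum>S\<in>Pow Om. z b S * v b S) = (\<Sum>b\<in>B. \<Sum>S\<in>Pow Om. ga b S * v b S) - (\<Sum>b\<in>B. g b * v b (A b))"
  proof -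
    have "(\<Sum>S\<in>Pow Om. z b S * v b S) = (\<Sum>S\<in>Pow Om. ga b S * v b S) - g b * v b (A b)" if b: "b \<in> B" for b
    proof -
      have "(\<Sum>S\<in>Pow Om. (if S = A b then g b else 0) * v b S) = (\<Sum>S\<in>Pow Om. if A b = S then g b * v b S else 0)"
        by (rule sum.cong) auto
      also have "\<dots> = g b * v b (A b)" using f AO b by simp
      finally show ?thesis by (simp add: z_def left_diff_distrib sum_subtractf)
    qed
    then show ?thesis by (simp add: sum_subtractf)
  qed
  have zr: "(\<Sum>j\<in>Om. zl j * r j) = (\<Sum>j\<in>U. be j * r j) - (\<Sum>j\<in>Om. al j * r j)"
  proof -
    have "(\<Sum>j\<in>Om. zl j * r j) = (\<Sum>j\<in>Om. (if j \<in> U then be j * r j else 0)) - (\<Sum>j\<in>Om. al j * r j)"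
      by (simp add: zl_eq be'_def left_diff_distrib sum_subtractf) (rule sum.cong; simp)
    also have "(\<Sum>j\<in>Om. (if j \<in> U then be j * r j else 0)) = (\<Sum>j\<in>Om \<inter> U. be j * r j)"
      using f(1) by (simp add: sum.inter_restrict)
    also have "Om \<inter> U = U" using UO by auto
    finally show ?thesis .
  qed
  have gv: "(\<Sum>b\<in>B. \<Sum>S\<in>Pow Om. ga b S * (v b (A b) - v b S)) = (\<Sum>b\<in>B. g b * v b (A b)) - (\<Sum>b\<in>B. \<Sum>S\<in>Pow Om. ga b S * v b S)"
    by (simp add: right_diff_distrib sum_subtractf g_def sum_distrib_right)
  have ar: "(\<Sum>j\<in>Om. al j * (- r j)) = - (\<Sum>j\<in>Om. al j * r j)" by (simp add: sum_negf)
  have pos: "(\<Sum>b\<in>B. \<Sum>S\<in>Pow Om. z b S * v b S) - (\<Sum>j\<in>Om. zl j * r j) > 0"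
    using C2 unfolding zv zr gv ar by linarith
  have "lp_objective Om B v r y > lp_objective Om B v r (xA A)"
    using objy pos eps0 by simp
  moreover have "lp_objective Om B v r y \<le> lp_objective Om B v r (xA A)"
    using opt feas by (simp add: lp_optimal_def)
  ultimately show False by simp
qed




lemma nat_ceil_ge: "real n \<le> (x::real) \<Longrightarrow> n \<le> nat \<lceil>x\<rceil>"
proof -
  assume h: "real n \<le> x"
  have "\<lceil>real n\<rceil> \<le> \<lceil>x\<rceil>" using h by (rule ceiling_mono)
  then have "int n \<le> \<lceil>x\<rceil>" by simp
  then show ?thesis by linarith
qed

lemma approx_eq:
  fixes v :: "'b \<Rightarrow> 'i set \<Rightarrow> real" and r :: "'i \<Rightarrow> real"
  assumes f: "finite Om" "finite B" and val: "\<forall>b\<in>B. valuation Om (v b)"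
    and r0: "\<forall>j\<in>Om. 0 \<le> r j" and gs: "\<forall>b\<in>B. gross_substitute Om (v b)" and e0: "0 < e"
  shows "\<exists>A p. is_allocation Om B A \<and> (\<forall>j\<in>Om. r j \<le> p j) \<and> (\<forall>j\<in>Om - (\<Union>b\<in>B. A b). p j = r j) \<and>
     (\<forall>b\<in>B. \<forall>S. S \<subseteq> Om \<longrightarrow> v b S - sum p S \<le> v b (A b) - sum p (A b) + e * real (card Om))"
proof -
  define pr :: "('i \<Rightarrow> nat) \<Rightarrow> 'i \<Rightarrow> real" where "pr k j = r j + e * real (k j)" for k j
  define pp :: "('b \<Rightarrow> 'i set) \<Rightarrow> ('i \<Rightarrow> nat) \<Rightarrow> 'b \<Rightarrow> 'i \<Rightarrow> real"
    where "pp A k b j = pr k j + (if j \<in> A b then 0 else e)" for A k b j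
  define M where "M = (\<Sum>b\<in>B. v b Om)"
  define K where "K = nat \<lceil>M / e\<rceil>"
  define Inv :: "('b \<Rightarrow> 'i set) \<Rightarrow> ('i \<Rightarrow> nat) \<Rightarrow> bool" where
    "Inv A k \<longleftrightarrow> is_allocation Om B A \<and> (\<forall>j\<in>Om - (\<Union>b\<in>B. A b). k j = 0) \<and> (\<forall>j\<in>Om. k j \<le> K) \<and>
       (\<forall>b\<in>B. \<exists>D\<in>demand Om (v b) (pp A k b). A b \<subseteq> D)" for A k
  have mono: "v b S \<le> v b T" if "b \<in> B" "S \<subseteq> T" "T \<subseteq> Om" for b S T
    using val that by (auto simp: valuation_def)
  have vemp: "v b {} = 0" if "b \<in> B" for b using val that by (auto simp: valuation_def)
  have vOmM: "v b Om \<le> M" if b: "b \<in> B" for b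
  proof -
    have "\<forall>c\<in>B. 0 \<le> v c Om" using mono vemp by force
    then show ?thesis unfolding M_def using f(2) b by (intro member_le_sum) auto
  qed
  have pp_ge: "r j \<le> pp A k b j" if "j \<in> Om" for A k b j
    using e0 that by (simp add: pp_def pr_def)
  have init: "Inv (\<lambda>_. {}) (\<lambda>_. 0)"
    unfolding Inv_def is_allocation_def using demand_ne[OF f(1)] by auto
  have bnd: "(\<Sum>j\<in>Om. k j) < card Om * K + 1" if "Inv A k" for A k
  proof -
    have "\<forall>j\<in>Om. k j \<le> K" using that by (simp add: Inv_def)
    then have "(\<Sum>j\<in>Om. k j) \<le> of_nat (card Om) * K" by (intro sum_bounded_above) auto
    then have "(\<Sum>j\<in>Om. k j) \<le> card Om * K" by simp
    then show ?thesis by simp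
  qed
  obtain st where st: "Inv (fst st) (snd st)"
    and stmax: "\<forall>st'. Inv (fst st') (snd st') \<longrightarrow> (\<Sum>j\<in>Om. snd st' j) \<le> (\<Sum>j\<in>Om. snd st j)"
    using ex_has_greatest_nat[of "\<lambda>st. Inv (fst st) (snd st)" "((\<lambda>_. {}), (\<lambda>_. 0))" "\<lambda>st. (\<Sum>j\<in>Om. snd st j)" "card Om * K + 1"]
      init bnd by auto
  define A where "A = fst st"
  define k where "k = snd st"
  have IA: "Inv A k" using st by (simp add: A_def k_def)
  have kmax: "\<And>A' k'. Inv A' k' \<Longrightarrow> (\<Sum>j\<in>Om. k' j) \<le> (\<Sum>j\<in>Om. k j)"
    using stmax unfolding k_def by (metis fst_conv snd_conv)
  have alloc: "is_allocation Om B A" using IA by (simp add: Inv_def)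
  have AO: "\<forall>b\<in>B. A b \<subseteq> Om" using alloc by (simp add: is_allocation_def)
  have termin: "A b \<in> demand Om (v b) (pp A k b)" if b: "b \<in> B" for b
  proof (rule ccontr)
    assume nd: "A b \<notin> demand Om (v b) (pp A k b)"
    obtain D where D: "D \<in> demand Om (v b) (pp A k b)" and AD: "A b \<subseteq> D" using IA b by (auto simp: Inv_def)
    have DO: "D \<subseteq> Om" using D by (simp add: demand_def)
    have finD: "finite D" using DO f(1) finite_subset by blast
    have DA: "D \<noteq> A b" using D nd by auto
    then obtain j0 where j0: "j0 \<in> D" "j0 \<notin> A b" using AD by blast
    define A' where "A' = (\<lambda>c. if c = b then D else A c - D)"
    define k' where "k' = (\<lambda>j. if j \<in> D - A b then Suc (k j) else k j)"
    have alloc': "is_allocation Om B A'"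
      using alloc DO unfolding is_allocation_def A'_def by (auto; blast)
    have un': "\<forall>j\<in>Om - (\<Union>c\<in>B. A' c). k' j = 0"
    proof
      fix j assume j: "j \<in> Om - (\<Union>c\<in>B. A' c)"
      then have jD: "j \<notin> D" using b by (auto simp: A'_def)
      then have "j \<in> Om - (\<Union>c\<in>B. A c)" using j AD by (auto simp: A'_def split: if_splits)
      then have "k j = 0" using IA by (simp add: Inv_def)
      then show "k' j = 0" using jD by (simp add: k'_def)
    qed
    have bound': "\<forall>j\<in>Om. k' j \<le> K"
    proof
      fix j assume j: "j \<in> Om"
      show "k' j \<le> K"
      proof (cases "j \<in> D - A b")
        case True
        have "v b (D - {j}) - sum (pp A k b) (D - {j}) \<le> v b D - sum (pp A k b) D"
        proof -
          have "D - {j} \<subseteq> Om" using DO by auto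
          then show ?thesis using D by (simp add: demand_def)
        qed
        moreover have "sum (pp A k b) D = pp A k b j + sum (pp A k b) (D - {j})"
          using finD True by (simp add: sum.remove)
        moreover have "v b (D - {j}) \<ge> 0" using mono[OF b, of "{}" "D - {j}"] vemp[OF b] DO by auto
        moreover have "v b D \<le> M" using mono[OF b, of D Om] DO vOmM[OF b] by auto
        ultimately have "pp A k b j \<le> M" by linarith
        moreover have "pp A k b j = r j + e * real (Suc (k j))" using True by (simp add: pp_def pr_def algebra_simps)
        moreover have "0 \<le> r j" using r0 j by blast
        ultimately have "e * real (Suc (k j)) \<le> M" by linarith
        then have "real (Suc (k j)) \<le> M / e" using e0 by (simp add: field_simps)
        then have "Suc (k j) \<le> K" unfolding K_def by (rule nat_ceil_ge)
        then show ?thesis using True by (simp add: k'_def)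
      next
        case False
        then have "k' j = k j" by (simp add: k'_def)
        then show ?thesis using IA j by (simp add: Inv_def)
      qed
    qed
    have ppb: "pp A' k' b = pp A k b"
    proof (rule ext)
      fix j
      show "pp A' k' b j = pp A k b j"
        using AD by (cases "j \<in> D - A b") (auto simp: pp_def pr_def A'_def k'_def algebra_simps)
    qed
    have dem': "\<forall>c\<in>B. \<exists>D'\<in>demand Om (v c) (pp A' k' c). A' c \<subseteq> D'"
    proof
      fix c assume c: "c \<in> B"
      show "\<exists>D'\<in>demand Om (v c) (pp A' k' c). A' c \<subseteq> D'"
      proof (cases "c = b")
        case True
        then show ?thesis using D ppb by (auto simp: A'_def)
      next
        case False
        obtain Dc where Dc: "Dc \<in> demand Om (v c) (pp A k c)" and ADc: "A c \<subseteq> Dc" using IA c by (auto simp: Inv_def)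
        have le: "\<forall>j\<in>Om. 0 \<le> pp A k c j \<and> pp A k c j \<le> pp A' k' c j"
        proof
          fix j assume j: "j \<in> Om"
          have "0 \<le> r j" using r0 j by blast
          then have "0 \<le> pp A k c j" using pp_ge[OF j, of A k c] by linarith
          moreover have "pp A k c j \<le> pp A' k' c j"
            using e0 False by (auto simp: pp_def pr_def A'_def k'_def distrib_left)
          ultimately show "0 \<le> pp A k c j \<and> pp A k c j \<le> pp A' k' c j" by simp
        qed
        obtain D2 where D2: "D2 \<in> demand Om (v c) (pp A' k' c)"
          and sub: "{j\<in>Dc. pp A k c j = pp A' k' c j} \<subseteq> D2"
          using gs c le Dc unfolding gross_substitute_def by blast
        have "A' c \<subseteq> {j\<in>Dc. pp A k c j = pp A' k' c j}"
          using ADc False by (auto simp: A'_def pp_def pr_def k'_def)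
        then show ?thesis using D2 sub by blast
      qed
    qed
    have "Inv A' k'" unfolding Inv_def using alloc' un' bound' dem' by blast
    then have le: "(\<Sum>j\<in>Om. k' j) \<le> (\<Sum>j\<in>Om. k j)" by (rule kmax)
    have "(\<Sum>j\<in>Om. k j) < (\<Sum>j\<in>Om. k' j)"
    proof (rule sum_strict_mono_ex1[OF f(1)])
      show "\<forall>x\<in>Om. k x \<le> k' x" by (simp add: k'_def)
      show "\<exists>a\<in>Om. k a < k' a" using j0 DO by (intro bexI[of _ j0]) (auto simp: k'_def)
    qed
    then show False using le by simp
  qed
  define p where "p = pr k"
  show ?thesis
  proof (intro exI conjI)
    show "is_allocation Om B A" by (rule alloc)
    show "\<forall>j\<in>Om. r j \<le> p j" using e0 by (simp add: p_def pr_def)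
    show "\<forall>j\<in>Om - (\<Union>b\<in>B. A b). p j = r j" using IA by (simp add: Inv_def p_def pr_def)
    show "\<forall>b\<in>B. \<forall>S. S \<subseteq> Om \<longrightarrow> v b S - sum p S \<le> v b (A b) - sum p (A b) + e * real (card Om)"
    proof (intro ballI allI impI)
      fix b S assume b: "b \<in> B" and S: "S \<subseteq> Om"
      have dm: "v b S - sum (pp A k b) S \<le> v b (A b) - sum (pp A k b) (A b)"
        using termin[OF b] S by (simp add: demand_def)
      have eqA: "sum (pp A k b) (A b) = sum p (A b)" by (rule sum.cong) (auto simp: pp_def p_def)
      have "sum (pp A k b) S \<le> sum (\<lambda>j. p j + e) S" by (rule sum_mono) (auto simp: pp_def p_def e0 less_imp_le)
      also have "\<dots> = sum p S + e * real (card S)" by (simp add: sum.distrib)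
      also have "\<dots> \<le> sum p S + e * real (card Om)"
        using card_mono[OF f(1) S] e0 by (simp add: mult_left_mono)
      finally show "v b S - sum p S \<le> v b (A b) - sum p (A b) + e * real (card Om)"
        using dm eqA by linarith
    qed
  qed
qed


lemma b1_exists:
  fixes v :: "'b \<Rightarrow> 'i set \<Rightarrow> real" and r :: "'i \<Rightarrow> real"
  assumes f: "finite Om" "finite B" and val: "\<forall>b\<in>B. valuation Om (v b)"
    and r0: "\<forall>j\<in>Om. 0 \<le> r j" and gs: "\<forall>b\<in>B. gross_substitute Om (v b)"
  shows "\<exists>A p. walrasian_eq_reserve Om B v r A p"
proof -
  have v0: "\<forall>b\<in>B. v b {} = 0" using val by (simp add: valuation_def)
  define AL where "AL = {A. (\<forall>b. (b \<in> B \<longrightarrow> A b \<in> Pow Om) \<and> (b \<notin> B \<longrightarrow> A b = {})) \<and> is_allocation Om B A}"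
  have finAL: "finite AL" unfolding AL_def using f
    by (intro finite_subset[OF _ finite_set_of_finite_funs[of B "Pow Om" "{}"]]) auto
  have neAL: "(\<lambda>b. {}) \<in> AL" unfolding AL_def is_allocation_def by auto
  define Wm where "Wm = Max (W Om B v r ` AL)"
  have "Wm \<in> W Om B v r ` AL" unfolding Wm_def using finAL neAL by (intro Max_in) auto
  then obtain As where As: "As \<in> AL" "W Om B v r As = Wm" by auto
  have AsA: "is_allocation Om B As" using As by (simp add: AL_def)
  have Wle: "W Om B v r A \<le> W Om B v r As" if A: "is_allocation Om B A" for A
  proof -
    define A' where "A' = (\<lambda>b. if b \<in> B then A b else {})"
    have "A' \<in> AL" using A unfolding AL_def A'_def is_allocation_def by auto
    then have "W Om B v r A' \<le> Wm" unfolding Wm_def using finAL by (intro Max_ge) auto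
    moreover have "W Om B v r A' = W Om B v r A" unfolding W_def A'_def by simp
    ultimately show ?thesis using As by simp
  qed
  have "lp_optimal Om B v r (xA As)"
    unfolding lp_optimal_def
  proof (intro conjI allI impI)
    show "lp_feasible Om B (xA As)" by (rule xA_feasible[OF f AsA])
    fix y assume y: "lp_feasible Om B y"
    show "lp_objective Om B v r y \<le> lp_objective Om B v r (xA As)"
    proof (rule ccontr)
      assume "\<not> ?thesis"
      then have gt: "lp_objective Om B v r y > W Om B v r As" using obj_xA[OF f AsA] by simp
      define dl where "dl = lp_objective Om B v r y - W Om B v r As"
      have dl0: "dl > 0" using gt by (simp add: dl_def)
      define C where "C = real (card B) * real (card Om) + 1"
      have C1: "C \<ge> 1" by (simp add: C_def)
      define e where "e = dl / (2 * C)"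
      have e0: "e > 0" using dl0 C1 by (simp add: e_def)
      obtain A p where A: "is_allocation Om B A" and rp: "\<forall>j\<in>Om. r j \<le> p j"
        and pU: "\<forall>j\<in>Om - (\<Union>b\<in>B. A b). p j = r j"
        and ap: "\<forall>b\<in>B. \<forall>S. S \<subseteq> Om \<longrightarrow> v b S - sum p S \<le> v b (A b) - sum p (A b) + e * real (card Om)"
        using approx_eq[OF f val r0 gs e0] by blast
      have d0: "0 \<le> e * real (card Om)" using e0 by simp
      have "lp_objective Om B v r y \<le> W Om B v r A + real (card B) * (e * real (card Om))"
        using weak_dual[OF f A v0 rp pU d0 ap y] .
      also have "\<dots> \<le> W Om B v r As + real (card B) * (e * real (card Om))" using Wle[OF A] by simp
      finally have "dl \<le> e * (real (card B) * real (card Om))" by (simp add: dl_def algebra_simps)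
      also have "\<dots> < e * C" using e0 by (simp add: C_def)
      also have "\<dots> = dl / 2" using C1 by (simp add: e_def)
      finally show False using dl0 by simp
    qed
  qed
  then show ?thesis using a2_backward[OF f AsA] by blast
qed

theorem theorem4:
  fixes Om :: "'i set" and B :: "'b set" and v :: "'b \<Rightarrow> 'i set \<Rightarrow> real"
    and r :: "'i \<Rightarrow> real" and a :: 'b
  assumes "finite Om" and "finite B"
    and "\<forall>b\<in>B. valuation Om (v b)"
    and "\<forall>j\<in>Om. 0 \<le> r j"
    and "a \<notin> B"
  shows
    "(\<forall>A p. is_allocation Om B A \<longrightarrow> (\<forall>j\<in>Om - (\<Union>b\<in>B. A b). p j = r j) \<longrightarrow>
        (walrasian_eq_reserve Om B v r A p \<longleftrightarrow>
          (\<exists>p'. (\<forall>j\<in>(\<Union>b\<in>B. A b). p' j = p j) \<and>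
                walrasian_eq Om (insert a B) (v(a := (\<lambda>S. sum r S)))
                  (A(a := Om - (\<Union>b\<in>B. A b))) p')))
     \<and> (\<forall>A. is_allocation Om B A \<longrightarrow>
        ((\<exists>p. walrasian_eq_reserve Om B v r A p) \<longleftrightarrow>
          lp_optimal Om B v r (\<lambda>b S. if S = A b then 1 else 0)))
     \<and> ((\<forall>b\<in>B. gross_substitute Om (v b)) \<longrightarrow>
        (\<exists>A p. walrasian_eq_reserve Om B v r A p) \<and>
        (\<forall>p q. (\<exists>A. walrasian_eq_reserve Om B v r A p) \<longrightarrow>
               (\<exists>A. walrasian_eq_reserve Om B v r A q) \<longrightarrow>
               (\<exists>A. walrasian_eq_reserve Om B v r A (\<lambda>j. min (p j) (q j))) \<and>
               (\<exists>A. walrasian_eq_reserve Om B v r A (\<lambda>j. max (p j) (q j)))))"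
proof (intro conjI allI impI)
  have f: "finite Om" "finite B" using assms by auto
  have v0: "\<forall>b\<in>B. v b {} = 0" using assms(3) by (simp add: valuation_def)
  {
    fix A p
    assume "is_allocation Om B A" "\<forall>j\<in>Om - (\<Union>b\<in>B. A b). p j = r j"
    then show "walrasian_eq_reserve Om B v r A p \<longleftrightarrow>
          (\<exists>p'. (\<forall>j\<in>(\<Union>b\<in>B. A b). p' j = p j) \<and>
                walrasian_eq Om (insert a B) (v(a := (\<lambda>S. sum r S)))
                  (A(a := Om - (\<Union>b\<in>B. A b))) p')"
      using part_a1[OF assms(1) assms(4) assms(5)] by blast
  }
  {
    fix A assume A: "is_allocation Om B A"
    have ex: "(\<lambda>b S. if S = A b then 1 else 0) = xA A" by (simp add: xA_def)
    show "(\<exists>p. walrasian_eq_reserve Om B v r A p) \<longleftrightarrow>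
          lp_optimal Om B v r (\<lambda>b S. if S = A b then 1 else 0)"
      unfolding ex using a2_forward[of Om B v r A, OF f v0] a2_backward[OF f A] by blast
  }
  {
    assume gs: "\<forall>b\<in>B. gross_substitute Om (v b)"
    show "\<exists>A p. walrasian_eq_reserve Om B v r A p" using b1_exists[OF f assms(3) assms(4) gs] .
    fix p q
    assume hp: "\<exists>A. walrasian_eq_reserve Om B v r A p" and hq: "\<exists>A. walrasian_eq_reserve Om B v r A q"
    obtain X where X: "walrasian_eq_reserve Om B v r X p" using hp by blast
    obtain Y where Y: "walrasian_eq_reserve Om B v r Y q" using hq by blast
    have L: "walrasian_eq_reserve Om B v r Y (\<lambda>j. min (p j) (q j)) \<and> walrasian_eq_reserve Om B v r Y (\<lambda>j. max (p j) (q j))"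
      using lattice_part[OF f assms(4) gs X Y] .
    show "\<exists>A. walrasian_eq_reserve Om B v r A (\<lambda>j. min (p j) (q j))" using L by blast
    show "\<exists>A. walrasian_eq_reserve Om B v r A (\<lambda>j. max (p j) (q j))" using L by blast
  }
qed

end
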